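(* Let $\eta\in(0.5,1)$. Consider the discrete-time system $x_{k+1}=f(x_k)+G(x_k)u_k+w_k$, $k=0,1,\dots,T$, with state $x_k\in\mathbb{R}^n$ (directly observed), input $u_k\in\mathbb{R}^m$, disturbance $w_k\in\mathbb{R}^n$, unknown $f:\mathbb{R}^n\to\mathbb{R}^n$, $G:\mathbb{R}^n\to\mathbb{R}^{n\times m}$, and state constraints $Hx\preceq d$ with $H=[h_1,\dots,h_{n_c}]^\top\in\mathbb{R}^{n_c\times n}$, $d=[d_1,\dots,d_{n_c}]^\top$; let $\mathcal{X}_s=\{x: Hx\preceq d\}$ and assume $x_0\in\mathcal{X}_s$. Assume: (A1) matrices $A\in\mathbb{R}^{n\times n}$, $B\in\mathbb{R}^{n\times m}$ are known, with approximation error $e(x,u):=f(x)+G(x)u-(Ax+Bu)$; (A2) $w_k\sim\mathcal{N}(\mu_w,\Sigma_w)$ with known $\mu_w,\Sigma_w$, and $w_k$ is uncorrelated with the exploration term $\varepsilon_k$; (A3) for a positive integer $\tau$, finite known $\bar\delta_j\ge\sup_{x,u}|h_j^\top e(x,u)|$ and $\bar\Delta_j\ge\sup_{x,u}|h_j^\top(A^{\tau-1}+\cdots+I)e(x,u)|$, $j=1,\dots,n_c$; (A4) $h_j^\top B\ne0$ for all $j=1,\dots,n_c$. Let $\xi$ be a real number with $\eta^{1/T}<\xi<1$, and define $\hat x_{k+1}:=Ax_k+B\mu(x_k;\theta_k)+\mu_w$ and $\eta'_k:=1-\frac{1-(\eta/\xi^k)^{1/\tau}}{n_c}$. Determine the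 input by: (i) if $x_k\in\mathcal{X}_s$ and $\|h_j^\top\Sigma_w^{1/2}\|_2\le\frac{1}{\Phi^{-1}(\eta'_k)}(d_j-h_j^\top\hat x_{k+1}-\delta_j)$ for all $\delta_j\in\{\pm\bar\delta_j\}$ and all $j$, set $u_k=\mu(x_k;\theta_k)+\varepsilon_k$ with $\varepsilon_k\sim\mathcal{N}(0,\Sigma_k)$, where $\Sigma_k$ is chosen to satisfy, for all $j$ and all $\delta_j\in\{\pm\bar\delta_j\}$, $$\left\|h_j^\top[B,\ I]\begin{bmatrix}\Sigma_k&0\\0&\Sigma_w\end{bmatrix}^{1/2}\right\|_2\le\frac{1}{\Phi^{-1}(\eta'_k)}(d_j-h_j^\top\hat x_{k+1}-\delta_j);$$ (ii) if $x_k\in\mathcal{X}_s$ and the inequality in (i) fails for some $j$ and some $\delta_j\in\{\pm\bar\delta_j\}$, set $u_k=u_k^{stay}$, a conservative input of the first kind, i.e. one with which $\Pr\{Hx_{k+1}\preceq d\}\ge(\eta/\xi^k)^{1/\tau}$ holds when $x_k\in\mathcal{X}_s$; (iii) if $x_k\notin\mathcal{X}_s$, set $u_k=u_k^{back}$, using a sequence of conservative inputs of the second kind $u_k^{back},u_{k+1}^{back},\dots,u_{k+\tau-1}^{back}$, i.e. inputs with which, when $x_k\notin\mathcal{X}_s$ occurs at time $k\ge1$, $\Pr\{x_{k+j}\in\mathcal{X}_s\}\ge\xi$ holds for some $j\le\tau$. Then $\Pr\{Hx_k\preceq d\}\ge\eta$ holds for every $k=1,2,\dots,T$.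
   Context: $\Phi$ is the standard normal cumulative distribution function; $\preceq$ is componentwise $\le$; $M^{1/2}$ is the matrix square root of a positive semidefinite matrix; $\|\cdot\|_2$ is the Euclidean norm. $\mu(\cdot;\theta):\mathbb{R}^n\to\mathbb{R}^m$ is a deterministic base policy whose parameter $\theta_k$ at time $k$ may be updated by a reinforcement learning algorithm. $T$ is the terminal time. The conservative inputs $u_k^{stay}$ and $u_k^{back}$ are assumed to be available with the stated properties. *)

theory Defs
  imports "HOL-Probability.Probability"
begin

definition Phi :: "real \<Rightarrow> real" where
  "Phi x = measure (density lborel std_normal_density) {..x}"

definition Phi_inv :: "real \<Rightarrow> real" where
  "Phi_inv p = (THE x. Phi x = p)"

primrec matpow :: "real^'n^'n \<Rightarrow> nat \<Rightarrow> real^'n^'n" where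
  "matpow A 0 = mat 1"
| "matpow A (Suc i) = A ** matpow A i"

definition psd :: "real^'n^'n \<Rightarrow> bool" where
  "psd S \<longleftrightarrow> transpose S = S \<and> (\<forall>x. 0 \<le> x \<bullet> (S *v x))"

definition msqrt :: "real^'n^'n \<Rightarrow> real^'n^'n" where
  "msqrt S = (THE R. psd R \<and> R ** R = S)"

text \<open>Block matrices used in the exploration condition:
  [B, I] and diag(Sigma_k, Sigma_w), indexed by the sum type 'm + 'n.\<close>
definition BI :: "real^'m^'n \<Rightarrow> real^('m + 'n)^'n" where
  "BI B = (\<chi> r c. case c of Inl a \<Rightarrow> B $ r $ a | Inr b \<Rightarrow> (if r = b then 1 else 0))"

definition blockdiag :: "real^'m^'m \<Rightarrow> real^'n^'n \<Rightarrow> real^('m + 'n)^('m + 'n)" where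
  "blockdiag S W = (\<chi> r c. case (r, c) of
      (Inl a, Inl b) \<Rightarrow> S $ a $ b
    | (Inr a, Inr b) \<Rightarrow> W $ a $ b
    | _ \<Rightarrow> 0)"

definition Xs :: "real^'n^'c \<Rightarrow> real^'c \<Rightarrow> (real^'n) set" where
  "Xs H d = {x. \<forall>j. (H *v x) $ j \<le> d $ j}"

definition gauss_cdf :: "real \<Rightarrow> real \<Rightarrow> real \<Rightarrow> real" where
  "gauss_cdf m v t = (if v = 0 then (if m \<le> t then 1 else 0) else Phi ((t - m) / sqrt v))"

definition cprob :: "'a measure \<Rightarrow> 'a measure \<Rightarrow> ('a \<Rightarrow> bool) \<Rightarrow> 'a \<Rightarrow> real" where
  "cprob M F P = real_cond_exp M F (indicator {\<omega> \<in> space M. P \<omega>})"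

end

theory Submission
  imports Defs
begin

lemma quad_disc:
  fixes a b c :: real
  assumes h: "\<And>t. 0 \<le> a + 2*b*t + c*t^2" and c: "0 \<le> c"
  shows "b^2 \<le> a*c"
proof (cases "c = 0")
  case True
  have "b = 0"
  proof (rule ccontr)
    assume "b \<noteq> 0"
    have "0 \<le> a + 2*b*(-(a+1)/(2*b)) + c*(-(a+1)/(2*b))^2" by (rule h)
    also have "\<dots> = -1" using \<open>b \<noteq> 0\<close> True by (simp add: field_simps)
    finally show False by simp
  qed
  then show ?thesis using True by simp
next
  case False
  then have cp: "0 < c" using c by simp
  have "0 \<le> a + 2*b*(-b/c) + c*(-b/c)^2" by (rule h)
  also have "\<dots> = a - b^2/c" using cp by (simp add: field_simps power2_eq_square)
  finally have "b^2/c \<le> a" by simp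
  then show ?thesis using cp by (simp add: field_simps mult.commute)
qed

lemma psd_sym: "psd P \<Longrightarrow> x \<bullet> (P *v y) = y \<bullet> (P *v x)"
proof -
  assume "psd P"
  then have t: "transpose P = P" by (simp add: psd_def)
  have "x \<bullet> (P *v y) = (x v* P) \<bullet> y" by (simp add: dot_lmul_matrix)
  also have "x v* P = transpose P *v x" by simp
  also have "\<dots> = P *v x" using t by simp
  finally show ?thesis by (simp add: inner_commute)
qed

lemma psd_nonneg: "psd P \<Longrightarrow> 0 \<le> x \<bullet> (P *v x)"
  by (simp add: psd_def)

lemma psd_cs:
  assumes "psd P"
  shows "(x \<bullet> (P *v y))^2 \<le> (x \<bullet> (P *v x)) * (y \<bullet> (P *v y))"
proof (rule quad_disc)
  fix t :: real
  have "0 \<le> (x + t *\<^sub>R y) \<bullet> (P *v (x + t *\<^sub>R y))" using assms by (rule psd_nonneg)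
  also have "\<dots> = x \<bullet> (P *v x) + 2 * (x \<bullet> (P *v y)) * t + (y \<bullet> (P *v y)) * t^2"
    using psd_sym[OF assms, of y x]
    by (simp add: matrix_vector_right_distrib matrix_vector_mult_scaleR inner_add_left inner_add_right
        algebra_simps power2_eq_square)
  finally show "0 \<le> x \<bullet> (P *v x) + 2 * (x \<bullet> (P *v y)) * t + (y \<bullet> (P *v y)) * t^2" .
qed (use assms psd_nonneg in auto)

lemma psd_zero_form:
  assumes "psd P" "y \<bullet> (P *v y) = 0"
  shows "P *v y = 0"
proof -
  have "((P *v y) \<bullet> (P *v y))^2 \<le> ((P *v y) \<bullet> (P *v (P *v y))) * (y \<bullet> (P *v y))"
    by (rule psd_cs[OF assms(1)])
  then have "((P *v y) \<bullet> (P *v y))^2 \<le> 0" using assms(2) by simp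
  then have "(P *v y) \<bullet> (P *v y) = 0" by simp
  then show ?thesis by simp
qed

lemma psd_contr:
  assumes "psd P" "\<And>x. x \<bullet> (P *v x) \<le> x \<bullet> x"
  shows "(P *v x) \<bullet> (P *v x) \<le> x \<bullet> x"
proof -
  let ?y = "P *v x"
  have e: "?y \<bullet> ?y = x \<bullet> (P *v ?y)" using psd_sym[OF assms(1), of x ?y] by simp
  have "(x \<bullet> (P *v ?y))^2 \<le> (x \<bullet> (P *v x)) * (?y \<bullet> (P *v ?y))" by (rule psd_cs[OF assms(1)])
  also have "\<dots> \<le> (x \<bullet> x) * (?y \<bullet> ?y)"
    by (intro mult_mono assms(2) psd_nonneg[OF assms(1)]) (auto intro: order_trans[OF psd_nonneg[OF assms(1)] assms(2)])
  finally have "(?y \<bullet> ?y)^2 \<le> (x \<bullet> x) * (?y \<bullet> ?y)" using e by simp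
  then show ?thesis
    by (cases "?y \<bullet> ?y = 0") (auto simp: power2_eq_square)
qed


lemma matpow_add: "matpow B (i + j) = matpow B i ** matpow B j"
  by (induction i) (auto simp: matrix_mul_assoc)

lemma matpow_comm: "X ** B = B ** X \<Longrightarrow> X ** matpow B i = matpow B i ** X"
proof (induction i)
  case (Suc i)
  have "X ** matpow B (Suc i) = (X ** B) ** matpow B i" by (simp add: matrix_mul_assoc)
  also have "\<dots> = B ** (X ** matpow B i)" by (simp only: Suc.prems matrix_mul_assoc)
  also have "\<dots> = B ** (matpow B i ** X)" using Suc by simp
  finally show ?case by (simp add: matrix_mul_assoc)
qed simp

lemma matpow_transpose: "transpose B = B \<Longrightarrow> transpose (matpow B i) = matpow B i"
proof (induction i)
  case (Suc i)
  have "transpose (matpow B (Suc i)) = matpow B i ** B"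
    using Suc by (simp add: matrix_transpose_mul)
  also have "\<dots> = B ** matpow B i" using matpow_comm[of B B i] by simp
  finally show ?case by simp
qed simp

lemma sym_inner: "transpose (P::real^'n^'n) = P \<Longrightarrow> x \<bullet> (P *v y) = (P *v x) \<bullet> y"
proof -
  assume t: "transpose P = P"
  have "x \<bullet> (P *v y) = (x v* P) \<bullet> y" by (simp add: dot_lmul_matrix)
  also have "x v* P = transpose P *v x" by simp
  also have "\<dots> = P *v x" using t by simp
  finally show ?thesis .
qed

lemma psd_matpow:
  assumes "psd B" shows "psd (matpow B i)"
proof -
  have tB: "transpose B = B" using assms by (simp add: psd_def)
  have tj: "transpose (matpow B j) = matpow B j" for j using matpow_transpose[OF tB] .
  have "0 \<le> x \<bullet> (matpow B i *v x)" for x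
  proof -
    let ?j = "i div 2"
    have "i = ?j + ?j \<or> i = Suc (?j + ?j)" by presburger
    then show ?thesis
    proof
      assume i: "i = ?j + ?j"
      have "x \<bullet> (matpow B i *v x) = x \<bullet> (matpow B ?j *v (matpow B ?j *v x))"
        by (subst i, simp only: matpow_add matrix_vector_mul_assoc)
      also have "\<dots> = (matpow B ?j *v x) \<bullet> (matpow B ?j *v x)"
        by (rule sym_inner[OF tj])
      finally show ?thesis by simp
    next
      assume i: "i = Suc (?j + ?j)"
      have "matpow B i = matpow B (?j + Suc ?j)" using i by simp
      also have "\<dots> = matpow B ?j ** (B ** matpow B ?j)" by (simp only: matpow_add matpow.simps)
      finally have "matpow B i = matpow B ?j ** (B ** matpow B ?j)" .
      then have "x \<bullet> (matpow B i *v x) = x \<bullet> (matpow B ?j *v (B *v (matpow B ?j *v x)))"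
        by (simp only: matrix_vector_mul_assoc)
      also have "\<dots> = (matpow B ?j *v x) \<bullet> (B *v (matpow B ?j *v x))"
        by (rule sym_inner[OF tj])
      finally show ?thesis using psd_nonneg[OF assms] by simp
    qed
  qed
  then show ?thesis using tj by (simp add: psd_def)
qed

inductive_set PP :: "real^'n^'n \<Rightarrow> (real^'n^'n) set" for B where
  PP_pow: "matpow B i \<in> PP B"
| PP_add: "P \<in> PP B \<Longrightarrow> Q \<in> PP B \<Longrightarrow> P + Q \<in> PP B"
| PP_scale: "0 \<le> c \<Longrightarrow> P \<in> PP B \<Longrightarrow> c *\<^sub>R P \<in> PP B"
| PP_zero: "0 \<in> PP B"

lemma PP_B: "B \<in> PP B"
  using PP_pow[of B 1] by simp

lemma mm_add_r: "(A + B) ** (C::real^'n^'n) = A ** C + B ** C"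
  by (simp add: matrix_matrix_mult_def vec_eq_iff sum.distrib algebra_simps)

lemma mm_scale_l: "(c *\<^sub>R A) ** (C::real^'n^'n) = c *\<^sub>R (A ** C)"
  by (simp add: matrix_matrix_mult_def vec_eq_iff sum_distrib_left algebra_simps)

lemma mm_scale_r: "A ** (c *\<^sub>R (C::real^'n^'n)) = c *\<^sub>R (A ** C)"
  by (simp add: matrix_matrix_mult_def vec_eq_iff sum_distrib_left algebra_simps)

lemma mv_scale_l: "(c *\<^sub>R A) *v (x::real^'n) = c *\<^sub>R (A *v x)"
  by (simp add: matrix_vector_mult_def vec_eq_iff sum_distrib_left algebra_simps)

lemma mv_add_l: "(A + B) *v (x::real^'n) = A *v x + B *v x"
  by (simp add: matrix_vector_mult_def vec_eq_iff sum.distrib algebra_simps)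

lemma PP_mult_pow: "Q \<in> PP B \<Longrightarrow> matpow B i ** Q \<in> PP B"
proof (induction rule: PP.induct)
  case (PP_pow j) then show ?case using PP.PP_pow[of B "i+j"] by (simp only: matpow_add)
next
  case (PP_add P Q) then show ?case by (simp only: matrix_add_ldistrib PP.PP_add)
next
  case (PP_scale c P) then show ?case by (simp only: mm_scale_r PP.PP_scale)
qed (simp add: PP.PP_zero)

lemma PP_mult: "P \<in> PP B \<Longrightarrow> Q \<in> PP B \<Longrightarrow> P ** Q \<in> PP B"
proof (induction rule: PP.induct)
  case (PP_pow j) then show ?case by (rule PP_mult_pow)
next
  case (PP_add P1 P2) then show ?case by (simp only: mm_add_r PP.PP_add)
next
  case (PP_scale c P) then show ?case by (simp only: mm_scale_l PP.PP_scale)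
qed (simp add: PP.PP_zero)

lemma PP_comm: "P \<in> PP B \<Longrightarrow> X ** B = B ** X \<Longrightarrow> X ** P = P ** X"
proof (induction rule: PP.induct)
  case (PP_pow j) then show ?case by (rule matpow_comm)
next
  case (PP_add P1 P2) then show ?case by (simp only: mm_add_r matrix_add_ldistrib)
next
  case (PP_scale c P) then show ?case by (simp only: mm_scale_l mm_scale_r)
qed simp

lemma PP_comm2: "P \<in> PP B \<Longrightarrow> Q \<in> PP B \<Longrightarrow> Q ** P = P ** Q"
  using PP_comm[of P B Q] PP_comm[of Q B B] by simp

lemma tr_add: "transpose (P + Q) = transpose P + transpose (Q::real^'n^'n)"
  by (simp add: transpose_def vec_eq_iff)

lemma PP_psd: "P \<in> PP B \<Longrightarrow> psd B \<Longrightarrow> psd P"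
proof (induction rule: PP.induct)
  case (PP_pow i) then show ?case by (rule psd_matpow)
next
  case (PP_add P Q) then show ?case
    by (auto simp: psd_def mv_add_l inner_add_right tr_add)
next
  case (PP_scale c P) then show ?case
    by (auto simp: psd_def transpose_scalar mv_scale_l)
qed (simp add: psd_def transpose_def vec_eq_iff)


lemma mm_diff_r: "(A - B) ** (C::real^'n^'n) = A ** C - B ** C"
  by (simp add: matrix_matrix_mult_def vec_eq_iff sum_subtractf algebra_simps)

lemma mm_diff_l: "C ** (A - B) = C ** A - (C::real^'n^'n) ** B"
  by (simp add: matrix_matrix_mult_def vec_eq_iff sum_subtractf algebra_simps)

lemma mv_diff_l: "(A - B) *v (x::real^'n) = A *v x - B *v x"
  by (simp add: matrix_vector_mult_def vec_eq_iff sum_subtractf algebra_simps)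

lemma tr_diff: "transpose (P - Q) = transpose P - transpose (Q::real^'n^'n)"
  by (simp add: transpose_def vec_eq_iff)

lemma mm_zero_l: "0 ** (A::real^'n^'n) = 0"
  by (simp add: matrix_matrix_mult_def vec_eq_iff)

primrec Yit :: "real^'n^'n \<Rightarrow> nat \<Rightarrow> real^'n^'n" where
  "Yit B 0 = 0"
| "Yit B (Suc n) = (1/2) *\<^sub>R (B + Yit B n ** Yit B n)"

lemma Yit_PP: "Yit B n \<in> PP B"
  by (induction n) (auto intro!: PP.intros PP_mult PP_B)

lemma Yit_diff_PP: "Yit B (Suc n) - Yit B n \<in> PP B"
proof (induction n)
  case 0 show ?case by (auto simp: mm_zero_l intro!: PP.intros PP_B)
next
  case (Suc n)
  let ?Y1 = "Yit B (Suc n)" and ?Y0 = "Yit B n"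
  have c: "?Y0 ** ?Y1 = ?Y1 ** ?Y0" using PP_comm2 Yit_PP by blast
  have "Yit B (Suc (Suc n)) - ?Y1 = (1/2) *\<^sub>R ((?Y1 - ?Y0) ** (?Y1 + ?Y0))"
    by (simp only: Yit.simps(2)[of B "Suc n"] mm_diff_r matrix_add_ldistrib c)
       (simp add: algebra_simps)
  moreover have "(?Y1 - ?Y0) ** (?Y1 + ?Y0) \<in> PP B"
    by (rule PP_mult[OF Suc.IH PP.PP_add[OF Yit_PP Yit_PP]])
  ultimately show ?case by (simp add: PP.PP_scale)
qed

lemma Yit_psd: "psd B \<Longrightarrow> psd (Yit B n)"
  using PP_psd Yit_PP by blast

lemma Yit_bound:
  assumes pB: "psd B" and hB: "\<And>x. x \<bullet> (B *v x) \<le> x \<bullet> x"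
  shows "x \<bullet> (Yit B n *v x) \<le> x \<bullet> x"
proof (induction n arbitrary: x)
  case 0 then show ?case by simp
next
  case (Suc n)
  let ?Y = "Yit B n"
  have pY: "psd ?Y" by (rule Yit_psd[OF pB])
  have tY: "transpose ?Y = ?Y" using pY by (simp add: psd_def)
  have "x \<bullet> (Yit B (Suc n) *v x) = (1/2) * (x \<bullet> (B *v x) + x \<bullet> (?Y *v (?Y *v x)))"
    by (simp add: mv_scale_l mv_add_l matrix_vector_mul_assoc inner_add_right)
  also have "x \<bullet> (?Y *v (?Y *v x)) = (?Y *v x) \<bullet> (?Y *v x)" by (rule sym_inner[OF tY])
  also have "(?Y *v x) \<bullet> (?Y *v x) \<le> x \<bullet> x" by (rule psd_contr[OF pY Suc.IH])
  finally show ?case using hB[of x] by simp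
qed

lemma Yit_mono:
  assumes pB: "psd B"
  shows "x \<bullet> (Yit B n *v x) \<le> x \<bullet> (Yit B (Suc n) *v x)"
proof -
  have "psd (Yit B (Suc n) - Yit B n)" by (rule PP_psd[OF Yit_diff_PP pB])
  then have "0 \<le> x \<bullet> ((Yit B (Suc n) - Yit B n) *v x)" by (rule psd_nonneg)
  then show ?thesis by (simp add: mv_diff_l inner_diff_right)
qed

lemma entry_inner: "axis i 1 \<bullet> (M *v axis j 1) = (M::real^'n^'n) $ i $ j"
proof -
  have "axis i 1 \<bullet> (M *v axis j 1) = (M *v axis j 1) $ i" by (simp add: inner_axis')
  also have "\<dots> = M $ i $ j" by (simp add: matrix_vector_mult_basis column_def)
  finally show ?thesis .
qed

lemma Yit_conv_form:
  assumes pB: "psd B" and hB: "\<And>x. x \<bullet> (B *v x) \<le> x \<bullet> x"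
  shows "convergent (\<lambda>n. x \<bullet> (Yit B n *v x))"
proof -
  have "incseq (\<lambda>n. x \<bullet> (Yit B n *v x))"
    by (rule incseq_SucI) (rule Yit_mono[OF pB])
  moreover have "\<forall>n. x \<bullet> (Yit B n *v x) \<le> x \<bullet> x" using Yit_bound[OF pB hB] by blast
  ultimately obtain L where "(\<lambda>n. x \<bullet> (Yit B n *v x)) \<longlonglongrightarrow> L"
    by (rule incseq_convergent)
  then show ?thesis by (auto simp: convergent_def)
qed

lemma Yit_conv_entry:
  fixes B :: "real^'n^'n"
  assumes pB: "psd B" and hB: "\<And>x. x \<bullet> (B *v x) \<le> x \<bullet> x"
  shows "convergent (\<lambda>n. Yit B n $ i $ j)"
proof -
  let ?a = "axis i 1 :: real^'n" and ?b = "axis j 1 :: real^'n"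
  let ?q = "\<lambda>x n. x \<bullet> (Yit B n *v x)"
  have e: "Yit B n $ i $ j = (?q (?a + ?b) n - ?q ?a n - ?q ?b n) / 2" for n
  proof -
    have s: "?b \<bullet> (Yit B n *v ?a) = ?a \<bullet> (Yit B n *v ?b)"
      using psd_sym[OF Yit_psd[OF pB]] by metis
    have "?q (?a + ?b) n = ?q ?a n + 2 * (?a \<bullet> (Yit B n *v ?b)) + ?q ?b n"
      using s by (simp add: matrix_vector_right_distrib inner_add_left inner_add_right)
    then show ?thesis by (simp add: entry_inner)
  qed
  have "\<And>x. (\<lambda>n. ?q x n) \<longlonglongrightarrow> lim (?q x)"
    using Yit_conv_form[OF pB hB] convergent_LIMSEQ_iff by blast
  then have "(\<lambda>n. (?q (?a + ?b) n - ?q ?a n - ?q ?b n) / 2) \<longlonglongrightarrow>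
      (lim (?q (?a + ?b)) - lim (?q ?a) - lim (?q ?b)) / 2"
    by (intro tendsto_intros) auto
  then show ?thesis unfolding e by (auto simp: convergent_def)
qed

definition Ylim :: "real^'n^'n \<Rightarrow> real^'n^'n" where
  "Ylim B = (\<chi> i j. lim (\<lambda>n. Yit B n $ i $ j))"

lemma Ylim_tendsto:
  assumes pB: "psd B" and hB: "\<And>x. x \<bullet> (B *v x) \<le> x \<bullet> x"
  shows "(\<lambda>n. Yit B n $ i $ j) \<longlonglongrightarrow> Ylim B $ i $ j"
  using Yit_conv_entry[OF pB hB, of i j] by (simp add: Ylim_def convergent_LIMSEQ_iff)

lemma form_tendsto:
  assumes "\<And>i j. (\<lambda>n. M n $ i $ j) \<longlonglongrightarrow> (L::real^'n^'n) $ i $ j"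
  shows "(\<lambda>n. x \<bullet> (M n *v y)) \<longlonglongrightarrow> x \<bullet> (L *v y)"
  unfolding inner_vec_def matrix_vector_mult_def
  by (auto intro!: tendsto_intros assms)

lemma prod_tendsto:
  assumes "\<And>i j. (\<lambda>n. M n $ i $ j) \<longlonglongrightarrow> (L::real^'n^'n) $ i $ j"
    and "\<And>i j. (\<lambda>n. N n $ i $ j) \<longlonglongrightarrow> (K::real^'n^'n) $ i $ j"
  shows "(\<lambda>n. (M n ** N n) $ i $ j) \<longlonglongrightarrow> (L ** K) $ i $ j"
  unfolding matrix_matrix_mult_def
  by (auto intro!: tendsto_intros assms)


context
  fixes B :: "real^'n^'n"
  assumes pB: "psd B" and hB: "\<And>x. x \<bullet> (B *v x) \<le> x \<bullet> x"
begin

lemma Ylim_eq: "Ylim B = (1/2) *\<^sub>R (B + Ylim B ** Ylim B)"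
proof -
  have "Ylim B $ i $ j = ((1/2) *\<^sub>R (B + Ylim B ** Ylim B)) $ i $ j" for i j
  proof -
    have t: "(\<lambda>n. Yit B n $ i $ j) \<longlonglongrightarrow> Ylim B $ i $ j" for i j by (rule Ylim_tendsto[OF pB hB])
    have a: "(\<lambda>n. Yit B (Suc n) $ i $ j) \<longlonglongrightarrow> Ylim B $ i $ j"
      by (rule LIMSEQ_Suc[OF t])
    have p: "(\<lambda>n. (Yit B n ** Yit B n) $ i $ j) \<longlonglongrightarrow> (Ylim B ** Ylim B) $ i $ j"
      by (rule prod_tendsto[OF t t])
    have "(\<lambda>n. (1/2) * (B $ i $ j + (Yit B n ** Yit B n) $ i $ j)) \<longlonglongrightarrow> (1/2) * (B $ i $ j + (Ylim B ** Ylim B) $ i $ j)"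
      by (intro tendsto_mult tendsto_add tendsto_const p)
    moreover have "(\<lambda>n. Yit B (Suc n) $ i $ j) = (\<lambda>n. (1/2) * (B $ i $ j + (Yit B n ** Yit B n) $ i $ j))"
      by simp
    ultimately have b: "(\<lambda>n. Yit B (Suc n) $ i $ j) \<longlonglongrightarrow> (1/2) * (B $ i $ j + (Ylim B ** Ylim B) $ i $ j)"
      by simp
    have "Ylim B $ i $ j = (1/2) * (B $ i $ j + (Ylim B ** Ylim B) $ i $ j)"
      using a b by (rule LIMSEQ_unique)
    then show ?thesis by simp
  qed
  then show ?thesis by (simp add: vec_eq_iff)
qed

lemma Ylim_form: "(\<lambda>n. x \<bullet> (Yit B n *v y)) \<longlonglongrightarrow> x \<bullet> (Ylim B *v y)"
  by (rule form_tendsto) (rule Ylim_tendsto[OF pB hB])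

lemma Ylim_sym: "transpose (Ylim B) = Ylim B"
proof -
  have "Ylim B $ j $ i = Ylim B $ i $ j" for i j
  proof -
    have "Yit B n $ j $ i = Yit B n $ i $ j" for n
    proof -
      have "transpose (Yit B n) = Yit B n" using Yit_psd[OF pB, of n] unfolding psd_def by simp
      then have "transpose (Yit B n) $ i $ j = Yit B n $ i $ j" by simp
      then show ?thesis by (simp add: transpose_def)
    qed
    then have "(\<lambda>n. Yit B n $ i $ j) \<longlonglongrightarrow> Ylim B $ j $ i"
      using Ylim_tendsto[OF pB hB, of j i] by simp
    then show ?thesis using Ylim_tendsto[OF pB hB, of i j] by (rule LIMSEQ_unique)
  qed
  then show ?thesis by (simp add: transpose_def vec_eq_iff)
qed

lemma Ylim_nonneg: "0 \<le> x \<bullet> (Ylim B *v x)"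
  using Ylim_form[of x x] psd_nonneg[OF Yit_psd[OF pB]]
  by (intro LIMSEQ_le_const) auto

lemma Ylim_le: "x \<bullet> (Ylim B *v x) \<le> x \<bullet> x"
  using Ylim_form[of x x] Yit_bound[OF pB hB]
  by (intro LIMSEQ_le_const2) auto

lemma Ylim_comm:
  assumes "X ** B = B ** X"
  shows "X ** Ylim B = Ylim B ** X"
proof -
  have c: "X ** Yit B n = Yit B n ** X" for n using PP_comm[OF Yit_PP assms] .
  have cX: "(\<lambda>n. X $ i $ j) \<longlonglongrightarrow> X $ i $ j" for i j by simp
  have "(X ** Ylim B) $ i $ j = (Ylim B ** X) $ i $ j" for i j
  proof -
    have "(\<lambda>n. (X ** Yit B n) $ i $ j) \<longlonglongrightarrow> (X ** Ylim B) $ i $ j"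
      by (rule prod_tendsto[OF cX Ylim_tendsto[OF pB hB]])
    moreover have "(\<lambda>n. (Yit B n ** X) $ i $ j) \<longlonglongrightarrow> (Ylim B ** X) $ i $ j"
      by (rule prod_tendsto[OF Ylim_tendsto[OF pB hB] cX])
    ultimately show ?thesis unfolding c by (rule LIMSEQ_unique)
  qed
  then show ?thesis by (simp add: vec_eq_iff)
qed

lemma R0_sq: "(mat 1 - Ylim B) ** (mat 1 - Ylim B) = mat 1 - B"
proof -
  let ?Y = "Ylim B"
  have "2 *\<^sub>R ?Y = 2 *\<^sub>R ((1/2) *\<^sub>R (B + ?Y ** ?Y))"
    using arg_cong[OF Ylim_eq, of "\<lambda>M. 2 *\<^sub>R M"] .
  then have "2 *\<^sub>R ?Y = B + ?Y ** ?Y" by simp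
  then have yy: "?Y ** ?Y = 2 *\<^sub>R ?Y - B" by (simp add: algebra_simps)
  have "(mat 1 - ?Y) ** (mat 1 - ?Y) = (mat 1 - ?Y) - (?Y - (2 *\<^sub>R ?Y - B))"
    by (simp only: mm_diff_r mm_diff_l matrix_mul_lid matrix_mul_rid yy)
  also have "\<dots> = mat 1 - B" by (simp add: scaleR_2)
  finally show ?thesis .
qed

lemma R0_psd: "psd (mat 1 - Ylim B)"
  unfolding psd_def
  by (auto simp: tr_diff Ylim_sym mv_diff_l inner_diff_right Ylim_le)

lemma R0_comm: "X ** B = B ** X \<Longrightarrow> X ** (mat 1 - Ylim B) = (mat 1 - Ylim B) ** X"
  using Ylim_comm by (simp add: mm_diff_r mm_diff_l)

end


lemma psd_quad_bound:
  fixes S :: "real^'n^'n"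
  shows "x \<bullet> (S *v x) \<le> (\<Sum>i\<in>UNIV. \<Sum>j\<in>UNIV. \<bar>S$i$j\<bar>) * (x \<bullet> x)"
proof -
  have "x \<bullet> (S *v x) = (\<Sum>i\<in>UNIV. \<Sum>j\<in>UNIV. x$i * (S$i$j * x$j))"
    by (simp add: inner_vec_def matrix_vector_mult_def sum_distrib_left)
  also have "\<dots> \<le> (\<Sum>i\<in>UNIV. \<Sum>j\<in>UNIV. \<bar>S$i$j\<bar> * (x \<bullet> x))"
  proof (intro sum_mono)
    fix i j
    have "x$i * (S$i$j * x$j) \<le> \<bar>x$i * (S$i$j * x$j)\<bar>" by simp
    also have "\<dots> = \<bar>S$i$j\<bar> * (\<bar>x$i\<bar> * \<bar>x$j\<bar>)" by (simp add: abs_mult)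
    also have "\<bar>x$i\<bar> * \<bar>x$j\<bar> \<le> norm x * norm x"
      by (intro mult_mono component_le_norm_cart) auto
    then have "\<bar>S$i$j\<bar> * (\<bar>x$i\<bar> * \<bar>x$j\<bar>) \<le> \<bar>S$i$j\<bar> * (norm x * norm x)"
      by (intro mult_left_mono) auto
    also have "norm x * norm x = x \<bullet> x" by (simp add: power2_norm_eq_inner[symmetric] power2_eq_square)
    finally show "x$i * (S$i$j * x$j) \<le> \<bar>S$i$j\<bar> * (x \<bullet> x)" .
  qed
  also have "\<dots> = (\<Sum>i\<in>UNIV. \<Sum>j\<in>UNIV. \<bar>S$i$j\<bar>) * (x \<bullet> x)"
    by (simp add: sum_distrib_right)
  finally show ?thesis .
qed

lemma psd_sqrt_ex:
  fixes S :: "real^'n^'n"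
  assumes pS: "psd S"
  shows "\<exists>R. psd R \<and> R ** R = S \<and> (\<forall>X. X ** S = S ** X \<longrightarrow> X ** R = R ** X)"
proof -
  define c where "c = 1 + (\<Sum>i\<in>UNIV. \<Sum>j\<in>UNIV. \<bar>S$i$j\<bar>)"
  have c0: "0 < c" unfolding c_def by (smt (verit) sum_nonneg abs_ge_zero)
  define B where "B = mat 1 - (1/c) *\<^sub>R S"
  have tS: "transpose S = S" using pS by (simp add: psd_def)
  have qS: "x \<bullet> (S *v x) \<le> c * (x \<bullet> x)" for x
  proof -
    have "x \<bullet> (S *v x) \<le> (c - 1) * (x \<bullet> x)" using psd_quad_bound[of x S] by (simp add: c_def)
    also have "\<dots> \<le> c * (x \<bullet> x)" by (simp add: algebra_simps)
    finally show ?thesis .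
  qed
  have Bx: "x \<bullet> (B *v x) = x \<bullet> x - (1/c) * (x \<bullet> (S *v x))" for x
    by (simp add: B_def mv_diff_l mv_scale_l inner_diff_right)
  have pB: "psd B"
  proof -
    have "transpose B = B" by (simp add: B_def tr_diff transpose_scalar tS)
    moreover have "0 \<le> x \<bullet> (B *v x)" for x
    proof -
      have "(1/c) * (x \<bullet> (S *v x)) \<le> (1/c) * (c * (x \<bullet> x))"
        using qS[of x] c0 by (intro mult_left_mono) auto
      also have "\<dots> = x \<bullet> x" using c0 by simp
      finally show ?thesis by (simp add: Bx)
    qed
    ultimately show ?thesis by (simp add: psd_def)
  qed
  have hB: "x \<bullet> (B *v x) \<le> x \<bullet> x" for x
    using psd_nonneg[OF pS, of x] c0 by (simp add: Bx)
  define R0 where "R0 = mat 1 - Ylim B"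
  have R0sq: "R0 ** R0 = (1/c) *\<^sub>R S"
    unfolding R0_def using R0_sq[OF pB hB] by (simp add: B_def)
  have pR0: "psd R0" unfolding R0_def by (rule R0_psd[OF pB hB])
  define R where "R = sqrt c *\<^sub>R R0"
  have "R ** R = (sqrt c * sqrt c) *\<^sub>R (R0 ** R0)"
    by (simp add: R_def mm_scale_l mm_scale_r)
  also have "\<dots> = S" using c0 by (simp add: R0sq)
  finally have RR: "R ** R = S" .
  have pR: "psd R"
    using pR0 c0 by (auto simp: psd_def R_def transpose_scalar mv_scale_l)
  have cR: "X ** R = R ** X" if "X ** S = S ** X" for X
  proof -
    have "X ** B = B ** X" using that by (simp add: B_def mm_diff_l mm_diff_r mm_scale_l mm_scale_r)
    then have "X ** R0 = R0 ** X" unfolding R0_def by (rule R0_comm[OF pB hB])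
    then show ?thesis by (simp add: R_def mm_scale_l mm_scale_r)
  qed
  show ?thesis using pR RR cR by blast
qed

lemma psd_sqrt_unique:
  fixes R P :: "real^'n^'n"
  assumes pR: "psd R" and pP: "psd P" and RR: "R ** R = S" and PP: "P ** P = S"
    and cR: "\<And>X. X ** S = S ** X \<Longrightarrow> X ** R = R ** X"
  shows "P = R"
proof -
  have "P ** S = S ** P" using PP[symmetric] by (simp add: matrix_mul_assoc)
  then have cPR: "P ** R = R ** P" by (rule cR)
  define D where "D = R - P"
  have tD: "transpose D = D" using pR pP by (simp add: D_def tr_diff psd_def)
  have z: "(R + P) ** D = 0"
    by (simp add: D_def mm_diff_l mm_add_r RR PP cPR)
  have Dx: "D *v x = 0" for x
  proof -
    let ?y = "D *v x"
    have "?y \<bullet> ((R + P) *v ?y) = ?y \<bullet> (((R + P) ** D) *v x)"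
      by (simp add: matrix_vector_mul_assoc)
    also have "\<dots> = 0" by (simp add: z)
    finally have "?y \<bullet> (R *v ?y) + ?y \<bullet> (P *v ?y) = 0" by (simp add: mv_add_l inner_add_right)
    moreover have "0 \<le> ?y \<bullet> (R *v ?y)" "0 \<le> ?y \<bullet> (P *v ?y)"
      using psd_nonneg pR pP by auto
    ultimately have "?y \<bullet> (R *v ?y) = 0" "?y \<bullet> (P *v ?y) = 0" by linarith+
    then have "R *v ?y = 0" "P *v ?y = 0" using psd_zero_form pR pP by auto
    then have Dy: "D *v ?y = 0" by (simp add: D_def mv_diff_l)
    have "?y \<bullet> ?y = x \<bullet> (D *v ?y)" using sym_inner[OF tD, of x ?y] by simp
    then have "?y \<bullet> ?y = 0" using Dy by simp
    then show ?thesis by simp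
  qed
  have "D = 0" using Dx by (simp add: matrix_eq)
  then show ?thesis by (simp add: D_def)
qed

lemma msqrt_props:
  fixes S :: "real^'n^'n"
  assumes "psd S"
  shows "psd (msqrt S) \<and> msqrt S ** msqrt S = S"
proof -
  obtain R where R: "psd R" "R ** R = S" "\<And>X. X ** S = S ** X \<Longrightarrow> X ** R = R ** X"
    using psd_sqrt_ex[OF assms] by blast
  have "\<exists>!R. psd R \<and> R ** R = S"
    using R psd_sqrt_unique[of R _ S] by blast
  then show ?thesis unfolding msqrt_def by (rule theI')
qed


lemma sym_inner': "transpose (P::real^'n^'n) = P \<Longrightarrow> x \<bullet> (P *v y) = (P *v x) \<bullet> y"
proof -
  assume t: "transpose P = P"
  have "x \<bullet> (P *v y) = (x v* P) \<bullet> y" by (simp add: dot_lmul_matrix)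
  also have "x v* P = transpose P *v x" by simp
  also have "\<dots> = P *v x" using t by simp
  finally show ?thesis .
qed

lemma sum_UNIV_plus:
  "(\<Sum>c\<in>(UNIV::('a::finite + 'b::finite) set). f c) = (\<Sum>a\<in>UNIV. f (Inl a)) + (\<Sum>b\<in>UNIV. f (Inr b))"
proof -
  have "(\<Sum>c\<in>(UNIV::('a + 'b) set). f c) = (\<Sum>c\<in>(UNIV <+> UNIV). f c)" by simp
  also have "\<dots> = (\<Sum>a\<in>UNIV. f (Inl a)) + (\<Sum>b\<in>UNIV. f (Inr b))"
    by (subst sum.Plus) (auto simp: comp_def)
  finally show ?thesis .
qed

lemma blockdiag_quad:
  fixes S :: "real^'m^'m" and W :: "real^'n^'n" and g :: "real^('m + 'n)"
  shows "g \<bullet> (blockdiag S W *v g) = (\<chi> a. g $ Inl a) \<bullet> (S *v (\<chi> a. g $ Inl a)) + (\<chi> b. g $ Inr b) \<bullet> (W *v (\<chi> b. g $ Inr b))"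
  by (simp add: inner_vec_def matrix_vector_mult_def blockdiag_def sum_UNIV_plus)

lemma blockdiag_transpose:
  fixes S :: "real^'m^'m" and W :: "real^'n^'n"
  shows "transpose (blockdiag S W) = blockdiag (transpose S) (transpose W)"
  by (simp add: vec_eq_iff transpose_def blockdiag_def split: sum.split)

lemma psd_blockdiag:
  fixes S :: "real^'m^'m" and W :: "real^'n^'n"
  assumes "psd S" "psd W"
  shows "psd (blockdiag S W)"
  using assms by (simp add: psd_def blockdiag_transpose blockdiag_quad add_nonneg_nonneg)

lemma BI_left:
  fixes B :: "real^'m^'n" and h :: "real^'n"
  shows "(\<chi> a. (h v* BI B) $ Inl a) = h v* B" "(\<chi> b. (h v* BI B) $ Inr b) = h"
  by (simp_all add: vec_eq_iff vector_matrix_mult_def BI_def if_distrib cong: if_cong)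

lemma norm_BI:
  fixes B :: "real^'m^'n" and h :: "real^'n" and R :: "real^('m+'n)^('m+'n)"
  assumes tR: "transpose R = R" and RR: "R ** R = blockdiag S W"
  shows "(norm (h v* (BI B ** R)))^2 = (h v* B) \<bullet> (S *v (h v* B)) + h \<bullet> (W *v h)"
proof -
  let ?g = "h v* BI B"
  have "h v* (BI B ** R) = ?g v* R" by (simp add: vector_matrix_mul_assoc)
  also have "\<dots> = transpose R *v ?g" by simp
  also have "\<dots> = R *v ?g" using tR by simp
  finally have "h v* (BI B ** R) = R *v ?g" .
  then have "(norm (h v* (BI B ** R)))^2 = (R *v ?g) \<bullet> (R *v ?g)"
    by (simp add: power2_norm_eq_inner)
  also have "\<dots> = ?g \<bullet> (R *v (R *v ?g))" using sym_inner'[OF tR, of ?g "R *v ?g"] by simp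
  also have "\<dots> = ?g \<bullet> (blockdiag S W *v ?g)" by (simp add: matrix_vector_mul_assoc RR)
  also have "\<dots> = (h v* B) \<bullet> (S *v (h v* B)) + h \<bullet> (W *v h)"
    by (simp add: blockdiag_quad BI_left)
  finally show ?thesis .
qed


abbreviation "NN \<equiv> density lborel std_normal_density"

lemma NN_rd: "real_distribution NN"
proof -
  have "prob_space NN" using prob_space_normal_density by simp
  then show ?thesis by (simp add: real_distribution_def real_distribution_axioms_def)
qed

interpretation NNd: real_distribution NN by (rule NN_rd)

lemma Phi_cdf: "Phi = cdf NN"
  by (simp add: fun_eq_iff Phi_def cdf_def)

lemma Phi_mono: "x \<le> y \<Longrightarrow> Phi x \<le> Phi y"
  unfolding Phi_cdf by (rule NNd.cdf_nondecreasing)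

lemma NN_singleton: "measure NN {x} = 0"
proof -
  have "AE y in lborel. y \<in> {x} \<longrightarrow> ennreal (std_normal_density y) = 0"
    using AE_lborel_singleton[of x] by eventually_elim auto
  then have "{x} \<in> null_sets NN"
    by (subst null_sets_density_iff) auto
  then show ?thesis by (simp add: measure_def emeasure_notin_sets null_setsD1)
qed

lemma Phi_cont: "isCont Phi x"
  unfolding Phi_cdf using NNd.isCont_cdf NN_singleton by blast

lemma Phi_strict:
  assumes "a < b" shows "Phi a < Phi b"
proof -
  define m where "m = max \<bar>a\<bar> \<bar>b\<bar>"
  define c where "c = std_normal_density m"
  have c0: "0 < c" unfolding c_def by (rule normal_density_pos) simp
  have fc: "c \<le> std_normal_density y" if "y \<in> {a<..b}" for y
  proof -
    have "\<bar>y\<bar> \<le> m" using that unfolding m_def by auto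
    then have "\<bar>y\<bar>^2 \<le> m^2" by (intro power_mono) auto
    then have "y^2 \<le> m^2" by simp
    then have "exp (- (m^2 / 2)) \<le> exp (- (y^2 / 2))" by simp
    then have "exp (- (m^2 / 2)) / sqrt (2 * pi) \<le> exp (- (y^2 / 2)) / sqrt (2 * pi)"
      by (intro divide_right_mono) auto
    then show ?thesis unfolding c_def std_normal_density_def by simp
  qed
  have "ennreal c * ennreal (b - a) = (\<integral>\<^sup>+ y. ennreal c * indicator {a<..b} y \<partial>lborel)"
    using assms by (simp add: nn_integral_cmult_indicator)
  also have "\<dots> \<le> (\<integral>\<^sup>+ y. ennreal (std_normal_density y) * indicator {a<..b} y \<partial>lborel)"
    by (intro nn_integral_mono) (auto simp: fc split: split_indicator)
  also have "\<dots> = emeasure NN {a<..b}" by (simp add: emeasure_density)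
  also have "\<dots> = ennreal (measure NN {a<..b})" by (rule NNd.emeasure_eq_measure)
  finally have "ennreal (c * (b - a)) \<le> ennreal (measure NN {a<..b})"
    using c0 assms by (simp add: ennreal_mult)
  then have "c * (b - a) \<le> measure NN {a<..b}"
    by (simp add: ennreal_le_iff)
  moreover have "0 < c * (b - a)" using c0 assms by simp
  ultimately have "0 < measure NN {a<..b}" by linarith
  then show ?thesis unfolding Phi_cdf using NNd.cdf_diff_eq[OF assms] by simp
qed

lemma Phi_top: "(Phi \<longlongrightarrow> 1) at_top"
  unfolding Phi_cdf by (rule NNd.cdf_lim_at_top_prob)

lemma Phi_bot: "(Phi \<longlongrightarrow> 0) at_bot"
  unfolding Phi_cdf by (rule NNd.cdf_lim_at_bot)

lemma Phi_inv:
  assumes "0 < p" "p < 1"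
  shows "Phi (Phi_inv p) = p"
proof -
  have "eventually (\<lambda>x. Phi x < p) at_bot"
    using order_tendstoD(2)[OF Phi_bot assms(1)] .
  then obtain a where a: "Phi a < p" by (auto simp: eventually_at_bot_linorder)
  have "eventually (\<lambda>x. p < Phi x) at_top"
    using order_tendstoD(1)[OF Phi_top assms(2)] .
  then obtain b where b: "p < Phi b" by (auto simp: eventually_at_top_linorder)
  have ab: "a \<le> b"
  proof (rule ccontr)
    assume "\<not> a \<le> b"
    then have "Phi b \<le> Phi a" by (intro Phi_mono) simp
    with a b show False by simp
  qed
  obtain x where "Phi x = p"
    using IVT[of Phi a p b] a b ab Phi_cont by (auto simp: less_imp_le)
  moreover have "y = x" if "Phi y = p" for y
  proof (rule ccontr)
    assume "y \<noteq> x"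
    then have "y < x \<or> x < y" by auto
    then show False using Phi_strict[of y x] Phi_strict[of x y] that \<open>Phi x = p\<close> by auto
  qed
  ultimately have "\<exists>!x. Phi x = p" by blast
  then show ?thesis unfolding Phi_inv_def by (rule theI')
qed

lemma Phi_zero: "Phi 0 = 1/2"
proof -
  have e: "emeasure NN {..0} = emeasure NN {0..}"
  proof -
    have "emeasure NN {..0} = (\<integral>\<^sup>+ y. ennreal (std_normal_density y) * indicator {..0} y \<partial>lborel)"
      by (simp add: emeasure_density)
    also have "\<dots> = ennreal \<bar>-1\<bar> * (\<integral>\<^sup>+ y. ennreal (std_normal_density (0 + (-1) * y)) * indicator {..0} (0 + (-1) * y) \<partial>lborel)"
      by (rule nn_integral_real_affine) auto
    also have "\<dots> = (\<integral>\<^sup>+ y. ennreal (std_normal_density y) * indicator {0..} y \<partial>lborel)"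
    proof -
      have "(\<lambda>y. ennreal (std_normal_density (0 + (-1) * y)) * indicator {..0} (0 + (-1) * y))
          = (\<lambda>y. ennreal (std_normal_density y) * indicator {0..} (y::real))"
        by (auto simp: fun_eq_iff std_normal_density_def split: split_indicator)
      then show ?thesis by simp
    qed
    also have "\<dots> = emeasure NN {0..}" by (simp add: emeasure_density)
    finally show ?thesis .
  qed
  then have m1: "measure NN {..0} = measure NN {0..}"
    by (simp add: NNd.emeasure_eq_measure)
  have "measure NN {0..} = measure NN ({0} \<union> {0<..})" by (rule arg_cong[where f="measure NN"]) auto
  also have "\<dots> = measure NN {0} + measure NN {0<..}"
    by (rule NNd.finite_measure_Union) auto
  finally have m2: "measure NN {0..} = measure NN {0<..}" using NN_singleton by simp
  have "measure NN (UNIV - {..0}) = 1 - measure NN {..0}"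
    using NNd.prob_compl[of "{..0}"] by simp
  moreover have "UNIV - {..0::real} = {0<..}" by auto
  ultimately have "measure NN {0<..} = 1 - measure NN {..0}" by simp
  then show ?thesis using m1 m2 by (simp add: Phi_def)
qed

lemma Phi_inv_pos:
  assumes "1/2 < p" "p < 1"
  shows "0 < Phi_inv p"
proof (rule ccontr)
  assume "\<not> 0 < Phi_inv p"
  then have "Phi (Phi_inv p) \<le> Phi 0" by (intro Phi_mono) simp
  then show False using Phi_inv[of p] assms Phi_zero by simp
qed

lemma Phi_ge:
  assumes "0 < p" "p < 1" "Phi_inv p \<le> x"
  shows "p \<le> Phi x"
  using Phi_mono[OF assms(3)] Phi_inv[OF assms(1,2)] by simp


lemma cprob_setint:
  assumes pM: "prob_space M" and sF: "sigma_finite_subalgebra M F"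
    and C: "C \<in> sets F" and E: "{\<omega>\<in>space M. P \<omega>} \<in> sets M"
  shows "measure M (C \<inter> {\<omega>\<in>space M. P \<omega>}) = (\<integral>\<omega>\<in>C. cprob M F P \<omega> \<partial>M)"
proof -
  interpret prob_space M by (rule pM)
  interpret sigma_finite_subalgebra M F by (rule sF)
  let ?E = "{\<omega>\<in>space M. P \<omega>}"
  have CM: "C \<in> sets M" using C subalg by (meson subalgebra_def subsetD)
  have int: "integrable M (indicator ?E :: 'a \<Rightarrow> real)"
    using E by (simp add: emeasure_eq_measure)
  have "(\<integral>\<omega>\<in>C. indicator ?E \<omega> \<partial>M) = (\<integral>\<omega>\<in>C. real_cond_exp M F (indicator ?E) \<omega> \<partial>M)"
    by (rule real_cond_exp_intA[OF int C])
  moreover have "(\<integral>\<omega>\<in>C. indicator ?E \<omega> \<partial>M) = measure M (C \<inter> ?E)"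
  proof -
    have "(\<integral>\<omega>\<in>C. indicator ?E \<omega> \<partial>M) = (\<integral>\<omega>. indicator (C \<inter> ?E) \<omega> \<partial>M)"
      unfolding set_lebesgue_integral_def by (intro Bochner_Integration.integral_cong) (auto split: split_indicator)
    also have "\<dots> = measure M (C \<inter> ?E)" using CM E by (simp add: Int_absorb2 sets.Int_space_eq2)
    finally show ?thesis .
  qed
  ultimately show ?thesis by (simp add: cprob_def)
qed

lemma cprob_lower:
  assumes pM: "prob_space M" and sF: "sigma_finite_subalgebra M F"
    and C: "C \<in> sets F" and E: "{\<omega>\<in>space M. P \<omega>} \<in> sets M"
    and ae: "AE \<omega> in M. \<omega> \<in> C \<longrightarrow> c \<le> cprob M F P \<omega>"
  shows "c * measure M C \<le> measure M (C \<inter> {\<omega>\<in>space M. P \<omega>})"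
proof -
  interpret prob_space M by (rule pM)
  interpret sigma_finite_subalgebra M F by (rule sF)
  let ?E = "{\<omega>\<in>space M. P \<omega>}"
  have CM: "C \<in> sets M" using C subalg by (meson subalgebra_def subsetD)
  have int: "integrable M (indicator ?E :: 'a \<Rightarrow> real)"
    using E by (simp add: emeasure_eq_measure)
  have "c * measure M C = (\<integral>\<omega>\<in>C. c \<partial>M)"
    using CM by (simp add: set_integral_const emeasure_eq_measure)
  also have "\<dots> \<le> (\<integral>\<omega>\<in>C. cprob M F P \<omega> \<partial>M)"
  proof (rule set_integral_mono_AE)
    show "set_integrable M C (\<lambda>_. c)"
      using CM by (simp add: set_integrable_def emeasure_eq_measure)
    show "set_integrable M C (cprob M F P)"
      unfolding set_integrable_def cprob_def
      by (rule integrable_mult_indicator[OF CM real_cond_exp_int(1)[OF int]])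
    show "AE x\<in>C in M. c \<le> cprob M F P x" using ae by simp
  qed
  also have "\<dots> = measure M (C \<inter> ?E)"
    by (rule cprob_setint[OF pM sF C E, symmetric])
  finally show ?thesis .
qed

lemma cprob_mono_on:
  assumes pM: "prob_space M" and sF: "sigma_finite_subalgebra M F"
    and D: "D \<in> sets F" and E1: "{\<omega>\<in>space M. P1 \<omega>} \<in> sets M" and E2: "{\<omega>\<in>space M. P2 \<omega>} \<in> sets M"
    and imp: "\<And>\<omega>. \<omega> \<in> space M \<Longrightarrow> \<omega> \<in> D \<Longrightarrow> P1 \<omega> \<Longrightarrow> P2 \<omega>"
  shows "AE \<omega> in M. \<omega> \<in> D \<longrightarrow> cprob M F P1 \<omega> \<le> cprob M F P2 \<omega>"
proof -
  interpret prob_space M by (rule pM)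
  interpret sigma_finite_subalgebra M F by (rule sF)
  let ?E1 = "{\<omega>\<in>space M. P1 \<omega>}" and ?E2 = "{\<omega>\<in>space M. P2 \<omega>}"
  have DM: "D \<in> sets M" using D subalg by (meson subalgebra_def subsetD)
  have mD: "(indicator D :: 'a \<Rightarrow> real) \<in> borel_measurable F" using D by simp
  have m1: "(indicator ?E1 :: 'a \<Rightarrow> real) \<in> borel_measurable M" using E1 by simp
  have m2: "(indicator ?E2 :: 'a \<Rightarrow> real) \<in> borel_measurable M" using E2 by simp
  have i1: "integrable M (\<lambda>\<omega>. indicator D \<omega> * indicator ?E1 \<omega> :: real)"
    by (rule integrable_const_bound[where B=1]) (use DM E1 in \<open>auto split: split_indicator\<close>)
  have i2: "integrable M (\<lambda>\<omega>. indicator D \<omega> * indicator ?E2 \<omega> :: real)"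
    by (rule integrable_const_bound[where B=1]) (use DM E2 in \<open>auto split: split_indicator\<close>)
  have a: "AE \<omega> in M. real_cond_exp M F (\<lambda>\<omega>. indicator D \<omega> * indicator ?E1 \<omega>) \<omega>
      \<le> real_cond_exp M F (\<lambda>\<omega>. indicator D \<omega> * indicator ?E2 \<omega>) \<omega>"
    by (rule real_cond_exp_mono[OF _ i1 i2]) (auto intro!: AE_I2 dest: imp split: split_indicator)
  have b1: "AE \<omega> in M. real_cond_exp M F (\<lambda>\<omega>. indicator D \<omega> * indicator ?E1 \<omega>) \<omega>
      = indicator D \<omega> * real_cond_exp M F (indicator ?E1) \<omega>"
    by (rule real_cond_exp_mult[OF mD m1 i1])
  have b2: "AE \<omega> in M. real_cond_exp M F (\<lambda>\<omega>. indicator D \<omega> * indicator ?E2 \<omega>) \<omega>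
      = indicator D \<omega> * real_cond_exp M F (indicator ?E2) \<omega>"
    by (rule real_cond_exp_mult[OF mD m2 i2])
  from a b1 b2 show ?thesis
    by eventually_elim (auto simp: cprob_def)
qed


lemma gauss_thresh:
  fixes Z t v :: "'a \<Rightarrow> real"
  assumes pM: "prob_space M" and sF: "sigma_finite_subalgebra M F"
    and Zm: "Z \<in> borel_measurable M" and tm: "t \<in> borel_measurable F"
    and hG: "\<And>r. AE \<omega> in M. cprob M F (\<lambda>\<omega>'. Z \<omega>' \<le> r) \<omega> = gauss_cdf m (v \<omega>) r"
    and hD: "\<And>\<omega>. \<omega> \<in> D \<Longrightarrow> 0 \<le> v \<omega> \<and> c \<le> gauss_cdf m (v \<omega>) (t \<omega>)"
    and c0: "0 < c" and c1: "c \<le> 1"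
  shows "AE \<omega> in M. \<omega> \<in> D \<longrightarrow> c \<le> cprob M F (\<lambda>\<omega>'. Z \<omega>' \<le> t \<omega>') \<omega>"
proof -
  interpret prob_space M by (rule pM)
  interpret sigma_finite_subalgebra M F by (rule sF)
  have spF: "space F = space M" using subalg by (simp add: subalgebra_def)
  have tM: "t \<in> borel_measurable M" using measurable_from_subalg[OF subalg tm] .
  define R0 :: "real set" where "R0 = insert m \<rat>"
  have cR: "countable R0" by (simp add: R0_def countable_rat)
  have A1: "AE \<omega> in M. \<forall>r\<in>R0. cprob M F (\<lambda>\<omega>'. Z \<omega>' \<le> r) \<omega> = gauss_cdf m (v \<omega>) r"
    using hG by (subst AE_ball_countable[OF cR]) auto
  have DF: "{\<omega>\<in>space M. r \<le> t \<omega>} \<in> sets F" for r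
  proof -
    have "{\<omega>\<in>space F. r \<le> t \<omega>} \<in> sets F" using tm by measurable
    then show ?thesis using spF by simp
  qed
  have E1: "{\<omega>\<in>space M. Z \<omega> \<le> r} \<in> sets M" for r using Zm by measurable
  have E2: "{\<omega>\<in>space M. Z \<omega> \<le> t \<omega>} \<in> sets M" using Zm tM by measurable
  have A2: "AE \<omega> in M. \<forall>r\<in>R0. \<omega> \<in> {\<omega>\<in>space M. r \<le> t \<omega>} \<longrightarrow>
      cprob M F (\<lambda>\<omega>'. Z \<omega>' \<le> r) \<omega> \<le> cprob M F (\<lambda>\<omega>'. Z \<omega>' \<le> t \<omega>') \<omega>"
  proof (subst AE_ball_countable[OF cR], intro ballI)
    fix r assume "r \<in> R0"
    show "AE \<omega> in M. \<omega> \<in> {\<omega>\<in>space M. r \<le> t \<omega>} \<longrightarrow>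
      cprob M F (\<lambda>\<omega>'. Z \<omega>' \<le> r) \<omega> \<le> cprob M F (\<lambda>\<omega>'. Z \<omega>' \<le> t \<omega>') \<omega>"
      by (rule cprob_mono_on[OF pM sF DF E1 E2]) auto
  qed
  from A1 A2 AE_space show ?thesis
  proof (eventually_elim)
    case (elim \<omega>)
    show ?case
    proof
      assume "\<omega> \<in> D"
      from hD[OF this] have v0: "0 \<le> v \<omega>" and cG: "c \<le> gauss_cdf m (v \<omega>) (t \<omega>)" by auto
      let ?cp = "cprob M F (\<lambda>\<omega>'. Z \<omega>' \<le> t \<omega>') \<omega>"
      have sp: "\<omega> \<in> space M" using elim(3) .
      show "c \<le> ?cp"
      proof (cases "v \<omega> = 0")
        case True
        then have "m \<le> t \<omega>" using cG c0 by (auto simp: gauss_cdf_def split: if_splits)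
        then have "cprob M F (\<lambda>\<omega>'. Z \<omega>' \<le> m) \<omega> \<le> ?cp" using elim(2) sp by (auto simp: R0_def)
        moreover have "cprob M F (\<lambda>\<omega>'. Z \<omega>' \<le> m) \<omega> = 1"
          using elim(1) True by (auto simp: R0_def gauss_cdf_def)
        ultimately show ?thesis using c1 by simp
      next
        case False
        then have vp: "0 < v \<omega>" using v0 by simp
        define g where "g = (\<lambda>r. Phi ((r - m) / sqrt (v \<omega>)))"
        have Gg: "gauss_cdf m (v \<omega>) r = g r" for r using False by (simp add: gauss_cdf_def g_def)
        show ?thesis
        proof (rule ccontr)
          assume "\<not> c \<le> ?cp"
          then have lt: "?cp < g (t \<omega>)" using cG Gg by simp
          have "isCont g (t \<omega>)" unfolding g_def
            by (intro continuous_intros isCont_o2[OF _ Phi_cont]) (use vp in auto)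
          then have "(g \<longlongrightarrow> g (t \<omega>)) (at (t \<omega>))" by (simp add: isCont_def)
          from order_tendstoD(1)[OF this lt]
          obtain d where d0: "0 < d" and dd: "\<And>r. r \<noteq> t \<omega> \<Longrightarrow> dist r (t \<omega>) < d \<Longrightarrow> ?cp < g r"
            by (auto simp: eventually_at)
          obtain r where rQ: "r \<in> \<rat>" and r1: "t \<omega> - d < r" and r2: "r < t \<omega>"
            using Rats_dense_in_real[of "t \<omega> - d" "t \<omega>"] d0 by auto
          have "?cp < g r" using dd[of r] r1 r2 by (auto simp: dist_real_def)
          moreover have "cprob M F (\<lambda>\<omega>'. Z \<omega>' \<le> r) \<omega> \<le> ?cp"
            using elim(2) sp rQ r2 by (auto simp: R0_def)
          moreover have "cprob M F (\<lambda>\<omega>'. Z \<omega>' \<le> r) \<omega> = g r"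
            using elim(1) rQ Gg by (auto simp: R0_def)
          ultimately show False by simp
        qed
      qed
    qed
  qed
qed


lemma mv_meas[measurable]: "f \<in> borel_measurable N \<Longrightarrow> (\<lambda>\<omega>. (A::real^'n^'m) *v f \<omega>) \<in> borel_measurable N"
proof -
  assume f: "f \<in> borel_measurable N"
  have "continuous_on UNIV (\<lambda>y::real^'n. A *v y)"
    by (simp add: linear_continuous_on linear_conv_bounded_linear)
  then have "(\<lambda>y::real^'n. A *v y) \<in> borel_measurable borel" by (rule borel_measurable_continuous_onI)
  from measurable_compose[OF f this] show ?thesis by simp
qed

lemma Xs_closed: "closed (Xs H d)"
proof -
  have "Xs H d = (\<Inter>j. {y. H $ j \<bullet> y \<le> d $ j})" by (auto simp: Xs_def matrix_vector_mul_component)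
  then show ?thesis by (auto intro!: closed_INT closed_halfspace_le)
qed

lemma Xs_borel: "Xs H d \<in> sets borel"
  by (rule borel_closed[OF Xs_closed])

theorem theorem2:
  fixes M :: "'a measure"
    and F :: "nat \<Rightarrow> 'a measure"
    and T :: nat and \<tau> :: nat
    and \<eta> \<xi> :: real
    and f :: "real^'n \<Rightarrow> real^'n"
    and G :: "real^'n \<Rightarrow> real^'m^'n"
    and A :: "real^'n^'n" and B :: "real^'m^'n"
    and H :: "real^'n^'c" and d :: "real^'c"
    and \<delta>bar \<Delta>bar :: "real^'c"
    and \<mu>w :: "real^'n" and \<Sigma>w :: "real^'n^'n"
    and \<mu> :: "real^'n \<Rightarrow> 'p \<Rightarrow> real^'m"
    and \<theta> :: "nat \<Rightarrow> 'a \<Rightarrow> 'p"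
    and x w :: "nat \<Rightarrow> 'a \<Rightarrow> real^'n"
    and u \<epsilon> ustay uback :: "nat \<Rightarrow> 'a \<Rightarrow> real^'m"
    and \<Sigma> :: "nat \<Rightarrow> 'a \<Rightarrow> real^'m^'m"
  defines "e \<equiv> (\<lambda>z v. f z + G z *v v - (A *v z + B *v v))"
    and "xnext \<equiv> (\<lambda>k \<omega>. A *v x k \<omega> + B *v \<mu> (x k \<omega>) (\<theta> k \<omega>) + \<mu>w)"
    and "\<eta>' \<equiv> (\<lambda>k. 1 - (1 - (\<eta> / \<xi> ^ k) powr (1 / real \<tau>)) / real CARD('c))"
    and "condi \<equiv> (\<lambda>k \<omega>. x k \<omega> \<in> Xs H d \<and>
           (\<forall>j. \<forall>\<delta>\<in>{\<delta>bar $ j, - \<delta>bar $ j}.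
              norm ((H $ j) v* msqrt \<Sigma>w)
                \<le> (1 / Phi_inv (1 - (1 - (\<eta> / \<xi> ^ k) powr (1 / real \<tau>)) / real CARD('c)))
                   * (d $ j - (H $ j) \<bullet> (A *v x k \<omega> + B *v \<mu> (x k \<omega>) (\<theta> k \<omega>) + \<mu>w) - \<delta>)))"
  assumes prob: "prob_space M"
    \<comment> \<open>information structure: a filtration to which state, policy and covariance are adapted\<close>
    and filt: "\<And>k. sigma_finite_subalgebra M (F k)"
    and filt_mono: "\<And>k. sets (F k) \<subseteq> sets (F (Suc k))"
    and x_meas: "\<And>k. x k \<in> borel_measurable (F k)"
    and pol_meas: "\<And>k. (\<lambda>\<omega>. \<mu> (x k \<omega>) (\<theta> k \<omega>)) \<in> borel_measurable (F k)"
    and \<Sigma>_meas: "\<And>k. \<Sigma> k \<in> borel_measurable (F k)"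
    and w_meas: "\<And>k. w k \<in> borel_measurable M"
    and \<epsilon>_meas: "\<And>k. \<epsilon> k \<in> borel_measurable M"
    \<comment> \<open>eta in (0.5,1), xi with eta^(1/T) < xi < 1, tau positive\<close>
    and \<eta>_gt: "1/2 < \<eta>" and \<eta>_lt: "\<eta> < 1"
    and \<xi>_gt: "\<eta> powr (1 / real T) < \<xi>" and \<xi>_lt: "\<xi> < 1"
    and \<tau>_pos: "0 < \<tau>"
    \<comment> \<open>dynamics and initial condition\<close>
    and dyn: "\<And>k \<omega>. k \<le> T \<Longrightarrow> x (Suc k) \<omega> = f (x k \<omega>) + G (x k \<omega>) *v u k \<omega> + w k \<omega>"
    and x0: "\<And>\<omega>. x 0 \<omega> \<in> Xs H d"
    \<comment> \<open>(A2) and (i): conditional joint Gaussianity of exploration and noise given the past\<close>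
    and \<Sigma>w_psd: "psd \<Sigma>w"
    and \<Sigma>_psd: "\<And>k \<omega>. psd (\<Sigma> k \<omega>)"
    and gauss: "\<And>k a b t. k \<le> T \<Longrightarrow>
       AE \<omega> in M. cprob M (F k) (\<lambda>\<omega>'. a \<bullet> \<epsilon> k \<omega>' + b \<bullet> w k \<omega>' \<le> t) \<omega>
          = gauss_cdf (b \<bullet> \<mu>w) (a \<bullet> (\<Sigma> k \<omega> *v a) + b \<bullet> (\<Sigma>w *v b)) t"
    \<comment> \<open>(A3)\<close>
    and A3a: "\<And>j z v. \<bar>(H $ j) \<bullet> e z v\<bar> \<le> \<delta>bar $ j"
    and A3b: "\<And>j z v. \<bar>(H $ j) \<bullet> ((\<Sum>i<\<tau>. matpow A i) *v e z v)\<bar> \<le> \<Delta>bar $ j"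
    \<comment> \<open>(A4)\<close>
    and A4: "\<And>j. (H $ j) v* B \<noteq> 0"
    \<comment> \<open>(i): choice of the exploration covariance\<close>
    and \<Sigma>_cond: "\<And>k \<omega> j \<delta>. k \<le> T \<Longrightarrow> condi k \<omega> \<Longrightarrow> \<delta> \<in> {\<delta>bar $ j, - \<delta>bar $ j} \<Longrightarrow>
       norm ((H $ j) v* (BI B ** msqrt (blockdiag (\<Sigma> k \<omega>) \<Sigma>w)))
         \<le> (1 / Phi_inv (\<eta>' k)) * (d $ j - (H $ j) \<bullet> xnext k \<omega> - \<delta>)"
    \<comment> \<open>input selection rule (i)/(ii)/(iii)\<close>
    and input_rule: "\<And>k \<omega>. k \<le> T \<Longrightarrow> u k \<omega> =
       (if x k \<omega> \<in> Xs H d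
        then (if condi k \<omega> then \<mu> (x k \<omega>) (\<theta> k \<omega>) + \<epsilon> k \<omega> else ustay k \<omega>)
        else uback k \<omega>)"
    \<comment> \<open>conservative input of the first kind\<close>
    and cons_stay: "\<And>k. k \<le> T \<Longrightarrow>
       AE \<omega> in M. (x k \<omega> \<in> Xs H d \<and> \<not> condi k \<omega>) \<longrightarrow>
          (\<eta> / \<xi> ^ k) powr (1 / real \<tau>) \<le> cprob M (F k) (\<lambda>\<omega>'. x (Suc k) \<omega>' \<in> Xs H d) \<omega>"
    \<comment> \<open>conservative inputs of the second kind\<close>
    and cons_back: "\<And>k. 1 \<le> k \<Longrightarrow> k \<le> T \<Longrightarrow>
       AE \<omega> in M. x k \<omega> \<notin> Xs H d \<longrightarrow>
          (\<exists>j\<in>{1..\<tau>}. \<xi> \<le> cprob M (F k) (\<lambda>\<omega>'. x (k + j) \<omega>' \<in> Xs H d) \<omega>)"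
  shows "\<forall>k\<in>{1..T}. \<eta> \<le> measure M {\<omega> \<in> space M. x k \<omega> \<in> Xs H d}"
proof -
  interpret pM: prob_space M by (rule prob)
  note e_def = \<open>e \<equiv> (\<lambda>z v. f z + G z *v v - (A *v z + B *v v))\<close>
  note xnext_def = \<open>xnext \<equiv> (\<lambda>k \<omega>. A *v x k \<omega> + B *v \<mu> (x k \<omega>) (\<theta> k \<omega>) + \<mu>w)\<close>
  note eta'_def = \<open>\<eta>' \<equiv> (\<lambda>k. 1 - (1 - (\<eta> / \<xi> ^ k) powr (1 / real \<tau>)) / real CARD('c))\<close>
  have sub: "subalgebra M (F k)" for k using filt[of k] by (simp add: sigma_finite_subalgebra_def)
  have spF: "space (F k) = space M" for k using sub[of k] by (simp add: subalgebra_def)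
  have setsF: "sets (F k) \<subseteq> sets M" for k using sub[of k] by (simp add: subalgebra_def)
  have Fmono: "sets (F i) \<subseteq> sets (F j)" if "i \<le> j" for i j
    using that
  proof (induction rule: dec_induct)
    case (step n) then show ?case using filt_mono[of n] by blast
  qed simp
  have xM: "x k \<in> borel_measurable M" for k using measurable_from_subalg[OF sub x_meas] .
  define Sf where "Sf k = {\<omega> \<in> space M. x k \<omega> \<in> Xs H d}" for k
  have SfF: "Sf k \<in> sets (F k)" for k
  proof -
    have "x k -` Xs H d \<inter> space (F k) \<in> sets (F k)" by (rule measurable_sets[OF x_meas Xs_borel])
    moreover have "x k -` Xs H d \<inter> space (F k) = Sf k" by (auto simp: Sf_def spF)
    ultimately show ?thesis by simp
  qed
  have SfM: "Sf k \<in> sets M" for k using SfF setsF by blast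
  have Sf_sp: "Sf k \<subseteq> space M" for k by (auto simp: Sf_def)
  have eta0: "0 < \<eta>" using \<eta>_gt by simp
  have T0: "0 < T"
  proof (rule ccontr)
    assume "\<not> 0 < T" then have "T = 0" by simp
    then show False using \<xi>_gt \<xi>_lt eta0 by simp
  qed
  have xi0: "0 < \<xi>" using \<xi>_gt eta0 by (smt (verit) powr_gt_zero)
  have etaxiT: "\<eta> < \<xi> ^ T"
  proof -
    have "(\<eta> powr (1 / real T)) ^ T = \<eta>"
      using T0 eta0 by (simp add: powr_realpow[symmetric] powr_powr)
    moreover have "(\<eta> powr (1 / real T)) ^ T < \<xi> ^ T"
      by (rule power_strict_mono[OF \<xi>_gt]) (use T0 in auto)
    ultimately show ?thesis by simp
  qed
  have etaxik: "\<eta> < \<xi> ^ k" if "k \<le> T" for k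
  proof -
    have "\<xi> ^ T \<le> \<xi> ^ k" by (rule power_decreasing[OF that]) (use xi0 \<xi>_lt in auto)
    then show ?thesis using etaxiT by simp
  qed
  define qk where "qk k = (\<eta> / \<xi> ^ k) powr (1 / real \<tau>)" for k
  define q where "q = \<eta> powr (1 / real \<tau>)"
  define nc where "nc = real CARD('c)"
  have nc1: "1 \<le> nc" by (simp add: nc_def Suc_le_eq)
  have q0: "0 < q" using eta0 by (simp add: q_def)
  have q1: "q \<le> 1"
  proof -
    have "\<eta> powr (1 / real \<tau>) \<le> 1 powr (1 / real \<tau>)"
      by (rule powr_mono2) (use eta0 \<eta>_lt in auto)
    then show ?thesis by (simp add: q_def)
  qed
  have qtau: "q ^ \<tau> = \<eta>"
    using \<tau>_pos eta0 by (simp add: q_def powr_realpow[symmetric] powr_powr)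
  have q_le_qk: "q \<le> qk k" if "k \<le> T" for k
  proof -
    have "\<xi> ^ k \<le> 1" using xi0 \<xi>_lt by (simp add: power_le_one)
    then have "\<eta> \<le> \<eta> / \<xi> ^ k" using eta0 xi0 by (simp add: le_divide_eq)
    then show ?thesis unfolding q_def qk_def by (intro powr_mono2) (use eta0 in auto)
  qed
  have qk_lt1: "qk k < 1" if "k \<le> T" for k
  proof -
    have "\<eta> / \<xi> ^ k < 1" using etaxik[OF that] xi0 by simp
    then have "(\<eta> / \<xi> ^ k) powr (1 / real \<tau>) < 1 powr (1 / real \<tau>)"
      by (intro powr_less_mono2) (use \<tau>_pos eta0 xi0 in auto)
    then show ?thesis by (simp add: qk_def)
  qed
  have qk_gt: "1/2 < qk k" if "k \<le> T" for k
  proof -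
    have a: "\<eta> / \<xi> ^ k < 1" using etaxik[OF that] xi0 by simp
    have b: "\<eta> \<le> \<eta> / \<xi> ^ k" using xi0 \<xi>_lt eta0 by (simp add: le_divide_eq power_le_one)
    have "(\<eta> / \<xi> ^ k) powr 1 \<le> (\<eta> / \<xi> ^ k) powr (1 / real \<tau>)"
      by (rule powr_mono') (use \<tau>_pos a eta0 xi0 in auto)
    then show ?thesis using b \<eta>_gt eta0 xi0 by (simp add: qk_def)
  qed
  have eta'_eq: "\<eta>' k = 1 - (1 - qk k) / nc" for k by (simp add: eta'_def qk_def nc_def)
  have eta'_gt: "1/2 < \<eta>' k" and eta'_lt: "\<eta>' k < 1" if "k \<le> T" for k
  proof -
    have "(1 - qk k) / nc \<le> 1 - qk k" using qk_lt1[OF that] nc1 by (simp add: divide_le_eq)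
    then show "1/2 < \<eta>' k" using qk_gt[OF that] unfolding eta'_eq by linarith
    have "0 < (1 - qk k) / nc" using qk_lt1[OF that] nc1 by simp
    then show "\<eta>' k < 1" unfolding eta'_eq by linarith
  qed
  have eta'_union: "1 - nc * (1 - \<eta>' k) = qk k" for k using nc1 by (simp add: eta'_eq)
  have step: "q * measure M C \<le> measure M (C \<inter> Sf (Suc k))"
    if kT: "k \<le> T" and CF: "C \<in> sets (F k)" and CS: "C \<subseteq> Sf k" for k C
  proof -
    note condi_def = \<open>condi \<equiv> (\<lambda>k \<omega>. x k \<omega> \<in> Xs H d \<and>
           (\<forall>j. \<forall>\<delta>\<in>{\<delta>bar $ j, - \<delta>bar $ j}.
              norm ((H $ j) v* msqrt \<Sigma>w)
                \<le> (1 / Phi_inv (1 - (1 - (\<eta> / \<xi> ^ k) powr (1 / real \<tau>)) / real CARD('c)))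
                   * (d $ j - (H $ j) \<bullet> (A *v x k \<omega> + B *v \<mu> (x k \<omega>) (\<theta> k \<omega>) + \<mu>w) - \<delta>)))\<close>
    define Cd where "Cd = {\<omega> \<in> space M. condi k \<omega>}"
    have CdF: "Cd \<in> sets (F k)"
    proof -
      have pm: "(\<lambda>\<omega>. \<mu> (x k \<omega>) (\<theta> k \<omega>)) \<in> borel_measurable (F k)" by (rule pol_meas)
      have "{\<omega> \<in> space (F k). condi k \<omega>} \<in> sets (F k)"
        unfolding condi_def using x_meas pm Xs_borel by measurable
      then show ?thesis by (simp add: Cd_def spF)
    qed
    define C1 where "C1 = C \<inter> Cd"
    define C2 where "C2 = C - Cd"
    have CM: "C \<in> sets M" using CF setsF by blast
    have C1F: "C1 \<in> sets (F k)" and C2F: "C2 \<in> sets (F k)" using CF CdF by (auto simp: C1_def C2_def)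
    have C1M: "C1 \<in> sets M" and C2M: "C2 \<in> sets M" using C1F C2F setsF by blast+
    have SfSM: "{\<omega>\<in>space M. x (Suc k) \<omega> \<in> Xs H d} \<in> sets M" using SfM[of "Suc k"] by (simp add: Sf_def)
    have P2: "q * measure M C2 \<le> measure M (C2 \<inter> Sf (Suc k))"
    proof -
      have "qk k * measure M C2 \<le> measure M (C2 \<inter> {\<omega>\<in>space M. x (Suc k) \<omega> \<in> Xs H d})"
      proof (rule cprob_lower[OF prob filt C2F SfSM])
        show "AE \<omega> in M. \<omega> \<in> C2 \<longrightarrow> qk k \<le> cprob M (F k) (\<lambda>\<omega>'. x (Suc k) \<omega>' \<in> Xs H d) \<omega>"
          using cons_stay[OF kT]
        proof eventually_elim
          case (elim \<omega>)
          show ?case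
          proof
            assume "\<omega> \<in> C2"
            then have "x k \<omega> \<in> Xs H d \<and> \<not> condi k \<omega>" using CS by (auto simp: C2_def Cd_def Sf_def)
            then show "qk k \<le> cprob M (F k) (\<lambda>\<omega>'. x (Suc k) \<omega>' \<in> Xs H d) \<omega>"
              using elim by (simp add: qk_def)
          qed
        qed
      qed
      moreover have "q * measure M C2 \<le> qk k * measure M C2"
        using q_le_qk[OF kT] by (intro mult_right_mono) auto
      ultimately show ?thesis by (simp add: Sf_def)
    qed
    have P1: "q * measure M C1 \<le> measure M (C1 \<inter> Sf (Suc k))"
    proof -
      define a where "a j = H $ j v* B" for j
      define Z where "Z j \<omega> = a j \<bullet> \<epsilon> k \<omega> + H $ j \<bullet> w k \<omega>" for j \<omega>
      define t where "t j \<omega> = d $ j - H $ j \<bullet> (A *v x k \<omega> + B *v \<mu> (x k \<omega>) (\<theta> k \<omega>)) - \<delta>bar $ j" for j \<omega>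
      define m where "m j = H $ j \<bullet> \<mu>w" for j
      define v where "v j \<omega> = a j \<bullet> (\<Sigma> k \<omega> *v a j) + H $ j \<bullet> (\<Sigma>w *v H $ j)" for j \<omega>
      define GG where "GG j = {\<omega>\<in>space M. Z j \<omega> \<le> t j \<omega>}" for j
      have pm: "(\<lambda>\<omega>. \<mu> (x k \<omega>) (\<theta> k \<omega>)) \<in> borel_measurable (F k)" by (rule pol_meas)
      have Zm: "Z j \<in> borel_measurable M" for j unfolding Z_def using \<epsilon>_meas w_meas by measurable
      have tm: "t j \<in> borel_measurable (F k)" for j unfolding t_def using x_meas pm by measurable
      have tM: "t j \<in> borel_measurable M" for j using measurable_from_subalg[OF sub tm] .
      have GGM: "GG j \<in> sets M" for j unfolding GG_def using Zm tM by measurable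
      have Pp: "0 < Phi_inv (\<eta>' k)" by (rule Phi_inv_pos[OF eta'_gt[OF kT] eta'_lt[OF kT]])
      have hD: "0 \<le> v j \<omega> \<and> \<eta>' k \<le> gauss_cdf (m j) (v j \<omega>) (t j \<omega>)" if "\<omega> \<in> Cd" for j \<omega>
      proof -
        have cd: "condi k \<omega>" using that by (simp add: Cd_def)
        let ?D = "blockdiag (\<Sigma> k \<omega>) \<Sigma>w"
        have pD: "psd ?D" by (rule psd_blockdiag[OF \<Sigma>_psd \<Sigma>w_psd])
        have R: "psd (msqrt ?D) \<and> msqrt ?D ** msqrt ?D = ?D" by (rule msqrt_props[OF pD])
        have tR: "transpose (msqrt ?D) = msqrt ?D" using R by (simp add: psd_def)
        have nv: "(norm (H $ j v* (BI B ** msqrt ?D)))^2 = v j \<omega>"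
          using norm_BI[OF tR conjunct2[OF R], of "H $ j" B] by (simp add: v_def a_def)
        have v0: "0 \<le> v j \<omega>" using nv by (metis zero_le_power2)
        have sv: "sqrt (v j \<omega>) = norm (H $ j v* (BI B ** msqrt ?D))"
          using nv[symmetric] by simp
        have sc: "norm (H $ j v* (BI B ** msqrt ?D)) \<le> (1 / Phi_inv (\<eta>' k)) * (d $ j - H $ j \<bullet> xnext k \<omega> - \<delta>bar $ j)"
          by (rule \<Sigma>_cond[OF kT cd]) simp
        have xn: "(1 / Phi_inv (\<eta>' k)) * (d $ j - H $ j \<bullet> xnext k \<omega> - \<delta>bar $ j) = (t j \<omega> - m j) / Phi_inv (\<eta>' k)"
        proof -
          have "d $ j - H $ j \<bullet> xnext k \<omega> - \<delta>bar $ j = t j \<omega> - m j"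
            by (simp add: xnext_def t_def m_def inner_add_right)
          then show ?thesis by simp
        qed
        have sc2: "sqrt (v j \<omega>) \<le> (t j \<omega> - m j) / Phi_inv (\<eta>' k)" using sc[unfolded xn sv[symmetric]] .
        show ?thesis
        proof (cases "v j \<omega> = 0")
          case True
          then have "0 \<le> (t j \<omega> - m j) / Phi_inv (\<eta>' k)" using sc2 by simp
          then have "m j \<le> t j \<omega>" using Pp by (simp add: zero_le_divide_iff)
          then show ?thesis using True eta'_lt[OF kT] by (simp add: gauss_cdf_def)
        next
          case False
          then have vp: "0 < v j \<omega>" using v0 by simp
          have "Phi_inv (\<eta>' k) * sqrt (v j \<omega>) \<le> t j \<omega> - m j"
            using sc2 Pp by (simp add: le_divide_eq mult.commute)
          then have "Phi_inv (\<eta>' k) \<le> (t j \<omega> - m j) / sqrt (v j \<omega>)"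
            using vp by (simp add: le_divide_eq)
          then have "\<eta>' k \<le> Phi ((t j \<omega> - m j) / sqrt (v j \<omega>))"
            by (intro Phi_ge) (use eta'_gt[OF kT] eta'_lt[OF kT] in auto)
          then show ?thesis using False v0 by (simp add: gauss_cdf_def)
        qed
      qed
      have ae: "AE \<omega> in M. \<omega> \<in> Cd \<longrightarrow> \<eta>' k \<le> cprob M (F k) (\<lambda>\<omega>'. Z j \<omega>' \<le> t j \<omega>') \<omega>" for j
      proof (rule gauss_thresh[OF prob filt Zm tm _ hD])
        show "AE \<omega> in M. cprob M (F k) (\<lambda>\<omega>'. Z j \<omega>' \<le> r) \<omega> = gauss_cdf (m j) (v j \<omega>) r" for r
          using gauss[OF kT, of "a j" "H $ j" r] by (simp add: Z_def m_def v_def)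
        show "0 < \<eta>' k" using eta'_gt[OF kT] by simp
        show "\<eta>' k \<le> 1" using eta'_lt[OF kT] by simp
      qed
      have Gb: "\<eta>' k * measure M C1 \<le> measure M (C1 \<inter> GG j)" for j
        unfolding GG_def
      proof (rule cprob_lower[OF prob filt C1F])
        show "{\<omega> \<in> space M. Z j \<omega> \<le> t j \<omega>} \<in> sets M" using GGM[of j] by (simp add: GG_def)
        show "AE \<omega> in M. \<omega> \<in> C1 \<longrightarrow> \<eta>' k \<le> cprob M (F k) (\<lambda>\<omega>'. Z j \<omega>' \<le> t j \<omega>') \<omega>"
          using ae[of j] by eventually_elim (auto simp: C1_def)
      qed
      have incl: "C1 \<inter> (\<Inter>j. GG j) \<subseteq> C1 \<inter> Sf (Suc k)"
      proof
        fix \<omega> assume om: "\<omega> \<in> C1 \<inter> (\<Inter>j. GG j)"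
        then have sp: "\<omega> \<in> space M" and cd: "condi k \<omega>" and xs: "x k \<omega> \<in> Xs H d"
          and Zt: "\<And>j. Z j \<omega> \<le> t j \<omega>"
          using CS by (auto simp: C1_def Cd_def GG_def Sf_def)
        have uk: "u k \<omega> = \<mu> (x k \<omega>) (\<theta> k \<omega>) + \<epsilon> k \<omega>" using input_rule[OF kT] cd xs by simp
        let ?x = "x k \<omega>" and ?p = "\<mu> (x k \<omega>) (\<theta> k \<omega>)"
        have ex: "x (Suc k) \<omega> = (A *v ?x + B *v ?p) + (B *v \<epsilon> k \<omega>) + e ?x (u k \<omega>) + w k \<omega>"
          using dyn[OF kT, of \<omega>] uk by (simp add: e_def algebra_simps)
        have "(H *v x (Suc k) \<omega>) $ j \<le> d $ j" for j
        proof -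
          have "(H *v x (Suc k) \<omega>) $ j = H $ j \<bullet> x (Suc k) \<omega>" by (simp add: matrix_vector_mul_component)
          also have "\<dots> = H $ j \<bullet> (A *v ?x + B *v ?p) + Z j \<omega> + H $ j \<bullet> e ?x (u k \<omega>)"
            by (simp only: ex inner_add_right Z_def a_def dot_lmul_matrix)
          also have "\<dots> \<le> H $ j \<bullet> (A *v ?x + B *v ?p) + t j \<omega> + \<delta>bar $ j"
            using Zt[of j] A3a[of j ?x "u k \<omega>"] by auto
          also have "\<dots> = d $ j" by (simp add: t_def)
          finally show ?thesis .
        qed
        then show "\<omega> \<in> C1 \<inter> Sf (Suc k)" using sp om by (simp add: Sf_def Xs_def)
      qed
      have INTM: "(\<Inter>j. GG j) \<in> sets M" using GGM by (intro sets.finite_INT) auto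
      have d1: "measure M (C1 - GG j) \<le> (1 - \<eta>' k) * measure M C1" for j
      proof -
        have "measure M (C1 - GG j) = measure M C1 - measure M (C1 \<inter> GG j)"
          by (rule pM.finite_measure_Diff'[OF C1M GGM])
        then show ?thesis using Gb[of j] by (simp add: algebra_simps)
      qed
      have "measure M (C1 - (\<Inter>j. GG j)) = measure M (\<Union>j\<in>UNIV. C1 - GG j)"
        by (rule arg_cong[where f="measure M"]) auto
      also have "\<dots> \<le> (\<Sum>j\<in>UNIV. measure M (C1 - GG j))"
        by (rule pM.finite_measure_subadditive_finite) (use C1M GGM in auto)
      also have "\<dots> \<le> (\<Sum>j\<in>(UNIV::'c set). (1 - \<eta>' k) * measure M C1)"
        by (rule sum_mono) (rule d1)
      also have "\<dots> = nc * (1 - \<eta>' k) * measure M C1" by (simp add: nc_def)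
      finally have d2: "measure M (C1 - (\<Inter>j. GG j)) \<le> nc * (1 - \<eta>' k) * measure M C1" .
      have "measure M (C1 - (\<Inter>j. GG j)) = measure M C1 - measure M (C1 \<inter> (\<Inter>j. GG j))"
        by (rule pM.finite_measure_Diff'[OF C1M INTM])
      with d2 have "(1 - nc * (1 - \<eta>' k)) * measure M C1 \<le> measure M (C1 \<inter> (\<Inter>j. GG j))"
        by (simp add: algebra_simps)
      then have "qk k * measure M C1 \<le> measure M (C1 \<inter> (\<Inter>j. GG j))" by (simp add: eta'_union)
      also have "\<dots> \<le> measure M (C1 \<inter> Sf (Suc k))"
        by (rule pM.finite_measure_mono[OF incl]) (use C1M SfM in auto)
      finally have "qk k * measure M C1 \<le> measure M (C1 \<inter> Sf (Suc k))" .
      moreover have "q * measure M C1 \<le> qk k * measure M C1"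
        using q_le_qk[OF kT] by (intro mult_right_mono) auto
      ultimately show ?thesis by simp
    qed
    have eC: "measure M C = measure M C1 + measure M C2"
    proof -
      have "measure M C = measure M (C1 \<union> C2)" by (rule arg_cong[where f="measure M"]) (auto simp: C1_def C2_def)
      also have "\<dots> = measure M C1 + measure M C2"
        by (rule pM.finite_measure_Union[OF C1M C2M]) (auto simp: C1_def C2_def)
      finally show ?thesis .
    qed
    have eS: "measure M (C \<inter> Sf (Suc k)) = measure M (C1 \<inter> Sf (Suc k)) + measure M (C2 \<inter> Sf (Suc k))"
    proof -
      have "measure M (C \<inter> Sf (Suc k)) = measure M ((C1 \<inter> Sf (Suc k)) \<union> (C2 \<inter> Sf (Suc k)))"
        by (rule arg_cong[where f="measure M"]) (auto simp: C1_def C2_def)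
      also have "\<dots> = measure M (C1 \<inter> Sf (Suc k)) + measure M (C2 \<inter> Sf (Suc k))"
        by (rule pM.finite_measure_Union) (use C1M C2M SfM in \<open>auto simp: C1_def C2_def\<close>)
      finally show ?thesis .
    qed
    show ?thesis using P1 P2 eC eS by (simp add: distrib_left)
  qed
  define Ch where "Ch a n = {\<omega> \<in> space M. \<forall>i\<le>n. x (a + i) \<omega> \<in> Xs H d}" for a n
  have Ch_alt: "Ch a n = (\<Inter>i\<in>{..n}. Sf (a + i))" for a n
    using Sf_sp by (auto simp: Ch_def Sf_def)
  have ChF: "Ch a n \<in> sets (F (a + n))" for a n
  proof -
    have "Sf (a + i) \<in> sets (F (a + n))" if "i \<le> n" for i
      using SfF[of "a + i"] Fmono[of "a + i" "a + n"] that by auto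
    then show ?thesis unfolding Ch_alt by (intro sets.finite_INT) auto
  qed
  have chain: "q ^ n * measure M C \<le> measure M (C \<inter> Ch a n)"
    if "a + n \<le> Suc T" "C \<in> sets (F a)" "C \<subseteq> Sf a" for a n C
    using that
  proof (induction n)
    case 0
    then have "C \<inter> Ch a 0 = C" by (auto simp: Ch_alt)
    then show ?case by simp
  next
    case (Suc n)
    have IH: "q ^ n * measure M C \<le> measure M (C \<inter> Ch a n)" using Suc by simp
    have C'F: "C \<inter> Ch a n \<in> sets (F (a + n))"
      using ChF[of a n] Suc.prems(2) Fmono[of a "a + n"] by auto
    have C'S: "C \<inter> Ch a n \<subseteq> Sf (a + n)" by (auto simp: Ch_alt)
    have "q ^ Suc n * measure M C = q * (q ^ n * measure M C)" by simp
    also have "\<dots> \<le> q * measure M (C \<inter> Ch a n)" using IH q0 by (intro mult_left_mono) auto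
    also have "\<dots> \<le> measure M ((C \<inter> Ch a n) \<inter> Sf (Suc (a + n)))"
      by (rule step) (use Suc.prems C'F C'S in auto)
    also have "(C \<inter> Ch a n) \<inter> Sf (Suc (a + n)) = C \<inter> Ch a (Suc n)"
      by (auto simp: Ch_alt le_Suc_eq)
    finally show ?case .
  qed
  have Ch_sub: "Ch a n \<subseteq> Sf (a + n)" for a n by (auto simp: Ch_alt)
  show ?thesis
  proof
    fix K assume K: "K \<in> {1..T}"
    have KT: "K \<le> T" and K1: "1 \<le> K" using K by auto
    have goal_eq: "{\<omega> \<in> space M. x K \<omega> \<in> Xs H d} = Sf K" by (simp add: Sf_def)
    have spF0: "space M \<in> sets (F a)" for a using sets.top[of "F a"] spF[of a] by simp
    show "\<eta> \<le> measure M {\<omega> \<in> space M. x K \<omega> \<in> Xs H d}"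
      unfolding goal_eq
    proof (cases "K \<le> \<tau>")
      case True
      have "q ^ K * measure M (space M) \<le> measure M (space M \<inter> Ch 0 K)"
        by (rule chain) (use KT x0 spF0 in \<open>auto simp: Sf_def\<close>)
      then have "q ^ K \<le> measure M (Ch 0 K)"
        by (simp add: pM.prob_space Int_absorb1 Ch_def)
      moreover have "\<eta> \<le> q ^ K"
        unfolding qtau[symmetric] by (rule power_decreasing[OF True]) (use q0 q1 in auto)
      moreover have "measure M (Ch 0 K) \<le> measure M (Sf K)"
        by (rule pM.finite_measure_mono[OF _ SfM]) (use Ch_sub[of 0 K] in simp)
      ultimately show "\<eta> \<le> measure M (Sf K)" by linarith
    next
      case False
      define k0 where "k0 = K - \<tau>"
      have k01: "1 \<le> k0" and k0T: "k0 \<le> T" and k0K: "k0 + \<tau> = K"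
        using False KT by (auto simp: k0_def)
      have tT: "\<tau> \<le> T" using False KT by simp
      have xi_q: "q \<le> \<xi>"
      proof -
        have "q \<le> \<eta> powr (1 / real T)" unfolding q_def
          by (rule powr_mono') (use tT \<tau>_pos eta0 \<eta>_lt in \<open>auto simp: frac_le\<close>)
        then show ?thesis using \<xi>_gt by simp
      qed
      define cp where "cp j = cprob M (F k0) (\<lambda>\<omega>'. x (k0 + j) \<omega>' \<in> Xs H d)" for j
      have cpF: "cp j \<in> borel_measurable (F k0)" for j
      proof -
        interpret sigma_finite_subalgebra M "F k0" by (rule filt)
        show ?thesis unfolding cp_def cprob_def by (rule borel_measurable_cond_exp)
      qed
      define U where "U j = {\<omega> \<in> space M. x k0 \<omega> \<notin> Xs H d \<and> \<xi> \<le> cp j \<omega> \<and> (\<forall>i\<in>{1..<j}. cp i \<omega> < \<xi>)}" for j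
      have UF: "U j \<in> sets (F k0)" for j
      proof -
        have "{\<omega> \<in> space (F k0). x k0 \<omega> \<notin> Xs H d \<and> \<xi> \<le> cp j \<omega> \<and> (\<forall>i\<in>{1..<j}. cp i \<omega> < \<xi>)} \<in> sets (F k0)"
          using x_meas cpF Xs_borel by measurable
        then show ?thesis by (simp add: U_def spF)
      qed
      have UM: "U j \<in> sets M" for j using UF setsF by blast
      have U_sub: "U j \<subseteq> space M - Sf k0" for j by (auto simp: U_def Sf_def)
      have U_disj: "disjoint_family_on U {1..\<tau>}"
        unfolding disjoint_family_on_def
      proof (intro ballI impI)
        fix i j assume "i \<in> {1..\<tau>}" "j \<in> {1..\<tau>}" "i \<noteq> j"
        have gen: "U a \<inter> U b = {}" if ab: "a < b" "a \<in> {1..\<tau>}" for a b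
        proof -
          have "cp a \<omega> < \<xi>" if "\<omega> \<in> U b" for \<omega>
          proof -
            from that have h: "\<forall>i'\<in>{1..<b}. cp i' \<omega> < \<xi>" by (simp add: U_def)
            have "a \<in> {1..<b}" using ab by simp
            with h show "cp a \<omega> < \<xi>" by blast
          qed
          then show ?thesis by (force simp: U_def)
        qed
        show "U i \<inter> U j = {}"
        proof (cases "i < j")
          case True then show ?thesis using gen \<open>i \<in> {1..\<tau>}\<close> by blast
        next
          case False then have "j < i" using \<open>i \<noteq> j\<close> by simp
          then show ?thesis using gen[of j i] \<open>j \<in> {1..\<tau>}\<close> by blast
        qed
      qed
      have U_cover: "AE \<omega> in M. \<omega> \<in> space M - Sf k0 \<longrightarrow> \<omega> \<in> (\<Union>j\<in>{1..\<tau>}. U j)"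
        using cons_back[OF k01 k0T] AE_space
      proof eventually_elim
        case (elim \<omega>)
        show ?case
        proof
          assume \<omega>: "\<omega> \<in> space M - Sf k0"
          then have "x k0 \<omega> \<notin> Xs H d" by (auto simp: Sf_def)
          then have ex: "\<exists>j. j \<in> {1..\<tau>} \<and> \<xi> \<le> cp j \<omega>" using elim(1) by (auto simp: cp_def)
          define j0 where "j0 = (LEAST j. j \<in> {1..\<tau>} \<and> \<xi> \<le> cp j \<omega>)"
          have j0: "j0 \<in> {1..\<tau>} \<and> \<xi> \<le> cp j0 \<omega>" unfolding j0_def by (rule LeastI_ex[OF ex])
          have "cp i \<omega> < \<xi>" if "i \<in> {1..<j0}" for i
          proof -
            have "\<not> (i \<in> {1..\<tau>} \<and> \<xi> \<le> cp i \<omega>)"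
              unfolding j0_def by (rule not_less_Least) (use that j0_def in simp)
            moreover have "i \<in> {1..\<tau>}" using that j0 by auto
            ultimately show ?thesis by simp
          qed
          then have "\<omega> \<in> U j0" using \<omega> j0 \<open>x k0 \<omega> \<notin> Xs H d\<close> by (auto simp: U_def)
          then show "\<omega> \<in> (\<Union>j\<in>{1..\<tau>}. U j)" using j0 by blast
        qed
      qed
      have measU: "measure M (space M - Sf k0) \<le> (\<Sum>j\<in>{1..\<tau>}. measure M (U j))"
      proof -
        have "emeasure M (space M - Sf k0) \<le> emeasure M (\<Union>j\<in>{1..\<tau>}. U j)"
          by (rule emeasure_mono_AE[OF U_cover]) (use UM in auto)
        then have "measure M (space M - Sf k0) \<le> measure M (\<Union>j\<in>{1..\<tau>}. U j)"
          by (simp add: pM.emeasure_eq_measure)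
        also have "\<dots> \<le> (\<Sum>j\<in>{1..\<tau>}. measure M (U j))"
          by (rule pM.finite_measure_subadditive_finite) (use UM in auto)
        finally show ?thesis .
      qed
      define W where "W j = (U j \<inter> Sf (k0 + j)) \<inter> Ch (k0 + j) (\<tau> - j)" for j
      have WM: "W j \<in> sets M" for j
        using UM SfM ChF setsF unfolding W_def by blast
      have W_bound: "\<eta> * measure M (U j) \<le> measure M (W j)" if j: "j \<in> {1..\<tau>}" for j
      proof -
        have "\<xi> * measure M (U j) \<le> measure M (U j \<inter> {\<omega>\<in>space M. x (k0 + j) \<omega> \<in> Xs H d})"
          by (rule cprob_lower[OF prob filt UF])
             (use SfM[of "k0 + j"] in \<open>auto simp: Sf_def U_def cp_def intro!: AE_I2\<close>)
        then have a: "\<xi> * measure M (U j) \<le> measure M (U j \<inter> Sf (k0 + j))" by (simp add: Sf_def)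
        have EF: "U j \<inter> Sf (k0 + j) \<in> sets (F (k0 + j))"
          using UF[of j] SfF[of "k0 + j"] Fmono[of k0 "k0 + j"] by auto
        have b: "q ^ (\<tau> - j) * measure M (U j \<inter> Sf (k0 + j)) \<le> measure M (W j)"
          unfolding W_def by (rule chain) (use EF j k0K KT in auto)
        have "\<eta> = q ^ (\<tau> - j) * q ^ j" using j qtau by (simp add: power_add[symmetric])
        also have "\<dots> \<le> q ^ (\<tau> - j) * \<xi>"
        proof (intro mult_left_mono)
          have "q ^ j \<le> q ^ 1" by (rule power_decreasing) (use j q0 q1 in auto)
          then show "q ^ j \<le> \<xi>" using xi_q by simp
        qed (use q0 in simp)
        finally have h: "\<eta> \<le> q ^ (\<tau> - j) * \<xi>" .
        have "\<eta> * measure M (U j) \<le> (q ^ (\<tau> - j) * \<xi>) * measure M (U j)"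
          using h by (rule mult_right_mono) simp
        also have "\<dots> = q ^ (\<tau> - j) * (\<xi> * measure M (U j))" by (simp add: mult.assoc)
        also have "\<dots> \<le> q ^ (\<tau> - j) * measure M (U j \<inter> Sf (k0 + j))"
          using a q0 by (intro mult_left_mono) auto
        also have "\<dots> \<le> measure M (W j)" by (rule b)
        finally show ?thesis .
      qed
      define W0 where "W0 = Sf k0 \<inter> Ch k0 \<tau>"
      have W0M: "W0 \<in> sets M" using SfM ChF setsF unfolding W0_def by blast
      have W0_bound: "\<eta> * measure M (Sf k0) \<le> measure M W0"
        unfolding W0_def qtau[symmetric] by (rule chain) (use SfF k0K KT in auto)
      have sub: "W0 \<union> (\<Union>j\<in>{1..\<tau>}. W j) \<subseteq> Sf K"
      proof -
        have "W0 \<subseteq> Sf K" using Ch_sub[of k0 \<tau>] k0K by (auto simp: W0_def)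
        moreover have "W j \<subseteq> Sf K" if "j \<in> {1..\<tau>}" for j
          using Ch_sub[of "k0 + j" "\<tau> - j"] that k0K by (auto simp: W_def)
        ultimately show ?thesis by blast
      qed
      have "measure M (W0 \<union> (\<Union>j\<in>{1..\<tau>}. W j)) = measure M W0 + measure M (\<Union>j\<in>{1..\<tau>}. W j)"
      proof (rule pM.finite_measure_Union)
        show "W0 \<inter> (\<Union>j\<in>{1..\<tau>}. W j) = {}"
          using U_sub by (fastforce simp: W0_def W_def)
      qed (use W0M WM in auto)
      also have "measure M (\<Union>j\<in>{1..\<tau>}. W j) = (\<Sum>j\<in>{1..\<tau>}. measure M (W j))"
      proof (rule pM.finite_measure_finite_Union)
        show "disjoint_family_on W {1..\<tau>}"
          using U_disj unfolding disjoint_family_on_def W_def by blast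
      qed (use WM in auto)
      finally have mW: "measure M (W0 \<union> (\<Union>j\<in>{1..\<tau>}. W j)) = measure M W0 + (\<Sum>j\<in>{1..\<tau>}. measure M (W j))" .
      have "\<eta> = \<eta> * (measure M (Sf k0) + measure M (space M - Sf k0))"
        using pM.prob_compl[OF SfM[of k0]] by simp
      also have "\<dots> \<le> \<eta> * measure M (Sf k0) + \<eta> * (\<Sum>j\<in>{1..\<tau>}. measure M (U j))"
        using measU eta0 by (simp add: distrib_left)
      also have "\<eta> * (\<Sum>j\<in>{1..\<tau>}. measure M (U j)) \<le> (\<Sum>j\<in>{1..\<tau>}. measure M (W j))"
        unfolding sum_distrib_left by (rule sum_mono) (rule W_bound)
      also have "\<eta> * measure M (Sf k0) + (\<Sum>j\<in>{1..\<tau>}. measure M (W j))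
          \<le> measure M W0 + (\<Sum>j\<in>{1..\<tau>}. measure M (W j))" using W0_bound by simp
      also have "\<dots> = measure M (W0 \<union> (\<Union>j\<in>{1..\<tau>}. W j))" using mW by simp
      also have "\<dots> \<le> measure M (Sf K)"
        by (rule pM.finite_measure_mono[OF sub SfM])
      finally show "\<eta> \<le> measure M (Sf K)" by simp
    qed
  qed
qed

end
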